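(* Let $M$ be a $\lambda$-term and $\vec x$ a list of $n$ distinct variables with $FV(M)\subseteq\vec x$. The following are equivalent: (1) $\llbracket M\rrbracket_{\vec x}$ is not the zero distributor, i.e. $\llbracket M\rrbracket_{\vec x}(\Delta,a)\neq\emptyset$ for some $\Delta\in(SD)^n$, $a\in D$; (2) the head reduction of $M$ ends; (3) $M$ is head-normalizable.
   Context: $[n]=\{1,\dots,n\}$. Fix a class $\mathcal C$ of functions between finite ordinals equal to one of: all bijections, all injections, all surjections, all functions. For a small category $X$, $SX$ has finite lists of objects of $X$ as objects and morphisms $\langle x_1,\dots,x_n\rangle\to\langle y_1,\dots,y_m\rangle$ the tuples $\langle\alpha,f_1,\dots,f_m\rangle$ with $\alpha:[m]\to[n]$ in $\mathcal C$, $f_i:x_{\alpha(i)}\to y_i$; composite of $\langle\alpha,\vec f\rangle$ then $\langle\beta,\vec g\rangle$ is $\langle\alpha\circ\beta,(g_i\circ f_{\beta(i)})_i\rangle$; tensor $\oplus$ = concatenation, unit $\langle\rangle$. Fix a small category $A$. $D=D_A$ is the colimit of $D_0=A$, $D_{k+1}=(SD_k)^{o}\times D_k\sqcup A$ along canonical inclusions: objects $a::=o\mid\vec a\Rightarrow a$ ($o\in\mathrm{Ob}(A)$); morphisms are those of $A$ and $\langle\alpha,\vec f\rangle\Rightarrow f:(\vec a\Rightarrow a)\to(\vec a'\Rightarrow a')$ for $\langle\alpha,\vec f\rangle:\vec a'\to\vec a$ in $SD$, $f:a\to a'$. $SD=S(D_A)$. Contexts are objects of $(SD)^n$; $\otimes$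 is componentwise concatenation; $\Delta\oplus\langle\vec a\rangle$ appends a component. Denotation $\llbracket M\rrbracket_{\vec x}:((SD)^n)^{o}\times D\to\mathrm{Set}$ for $\vec x=\langle x_1..x_n\rangle\supseteq FV(M)$ (functorial action from hom-functors and coends): $\llbracket x_i\rrbracket_{\vec x}(\Delta,a)=(SD)^n(\Delta,\langle\langle\rangle,\dots,\langle a\rangle,\dots,\langle\rangle\rangle)$ ($\langle a\rangle$ at position $i$); $\llbracket\lambda y.P\rrbracket_{\vec x}(\Delta,a)=\llbracket P\rrbracket_{\vec x\oplus\langle y\rangle}(\Delta\oplus\langle\vec a'\rangle,a')$ if $a=\vec a'\Rightarrow a'$, $\emptyset$ if $a$ atomic; $\llbracket PQ\rrbracket_{\vec x}(\Delta,a)=\int^{\vec a=\langle a_1..a_k\rangle\in SD}\int^{\Gamma_0..\Gamma_k\in(SD)^n}\llbracket P\rrbracket_{\vec x}(\Gamma_0,\vec a\Rightarrow a)\times\prod_{i=1}^k\llbracket Q\rrbracket_{\vec x}(\Gamma_i,a_i)\times(SD)^n(\Delta,\bigotimes_{i=0}^k\Gamma_i)$. Head reduction: $H(M)=M$ if $M=\lambda\vec y.\,y\vec N$ (head-normal form), and $H(M)=\lambda\vec y.\,P[N/x]\vec N$ if $M=\lambda\vec y.(\lambda x.P)N\vec N$; the head reduction of $M$ ends if iterating $H$ reaches a head-normal form. $M$ is head-normalizable if it $\beta$-reduces to a head-normal form. *)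

theory Defs
  imports Main
begin

record ('o, 'm) category =
  Ob   :: "'o set"
  Mor  :: "'m set"
  Dom  :: "'m \<Rightarrow> 'o"
  Cod  :: "'m \<Rightarrow> 'o"
  Idm  :: "'o \<Rightarrow> 'm"
  Comp :: "'m \<Rightarrow> 'm \<Rightarrow> 'm"   (* Comp g f = g o f *)

definition is_category :: "('o, 'm) category \<Rightarrow> bool" where
  "is_category A \<longleftrightarrow>
     (\<forall>f\<in>Mor A. Dom A f \<in> Ob A \<and> Cod A f \<in> Ob A) \<and>
     (\<forall>x\<in>Ob A. Idm A x \<in> Mor A \<and> Dom A (Idm A x) = x \<and> Cod A (Idm A x) = x) \<and>
     (\<forall>f\<in>Mor A. \<forall>g\<in>Mor A. Cod A f = Dom A g \<longrightarrow>
        Comp A g f \<in> Mor A \<and> Dom A (Comp A g f) = Dom A f \<and> Cod A (Comp A g f) = Cod A g) \<and>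
     (\<forall>f\<in>Mor A. Comp A f (Idm A (Dom A f)) = f \<and> Comp A (Idm A (Cod A f)) f = f) \<and>
     (\<forall>f\<in>Mor A. \<forall>g\<in>Mor A. \<forall>h\<in>Mor A. Cod A f = Dom A g \<longrightarrow> Cod A g = Dom A h \<longrightarrow>
        Comp A h (Comp A g f) = Comp A (Comp A h g) f)"

datatype fclass = Bijections | Injections | Surjections | AllFunctions

text \<open>A function [m] -> [n] is represented (0-indexed) by the list al of its
  values: length al = m, and al ! i < n.\<close>
definition inC :: "fclass \<Rightarrow> nat \<Rightarrow> nat \<Rightarrow> nat list \<Rightarrow> bool" where
  "inC c m n al \<longleftrightarrow> length al = m \<and> (\<forall>i<m. al ! i < n) \<and>
     (case c of
        Bijections \<Rightarrow> bij_betw (\<lambda>i. al ! i) {..<m} {..<n}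
      | Injections \<Rightarrow> inj_on (\<lambda>i. al ! i) {..<m}
      | Surjections \<Rightarrow> (\<lambda>i. al ! i) ` {..<m} = {..<n}
      | AllFunctions \<Rightarrow> True)"

section \<open>The category D = D_A\<close>

datatype 'o dty = Atom 'o | Arr "'o dty list" "'o dty"

fun dobj :: "('o, 'm) category \<Rightarrow> 'o dty \<Rightarrow> bool" where
  "dobj A (Atom o') = (o' \<in> Ob A)"
| "dobj A (Arr as b) = ((\<forall>x\<in>set as. dobj A x) \<and> dobj A b)"

datatype 'm dmor = AM 'm | ArrM "nat list" "'m dmor list" "'m dmor"

text \<open>The morphism
  (<alpha, fs> => g) : (bs => b) -> (bs' => b') has <alpha, fs> : bs' -> bs in SD
  (alpha : [length bs] -> [length bs'] in C, fs ! i : bs' ! (alpha i) -> bs ! i)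
  and g : b -> b'.\<close>
inductive dhom :: "fclass \<Rightarrow> ('o, 'm) category \<Rightarrow> 'o dty \<Rightarrow> 'o dty \<Rightarrow> 'm dmor \<Rightarrow> bool"
  for C A where
  dhom_atom: "f \<in> Mor A \<Longrightarrow> Dom A f = x \<Longrightarrow> Cod A f = y \<Longrightarrow> dhom C A (Atom x) (Atom y) (AM f)"
| dhom_arr: "inC C (length bs) (length bs') al \<Longrightarrow> length fs = length bs \<Longrightarrow>
     (\<forall>i<length bs. dhom C A (bs' ! (al ! i)) (bs ! i) (fs ! i)) \<Longrightarrow>
     dhom C A b b' g \<Longrightarrow> dhom C A (Arr bs b) (Arr bs' b') (ArrM al fs g)"

type_synonym 'm sdmor = "nat list \<times> 'm dmor list"

text \<open>SD morphism <alpha, fs> : xs -> ys, alpha : [length ys] -> [length xs] in C,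
  fs ! i : xs ! (alpha i) -> ys ! i.\<close>
definition sdhom :: "fclass \<Rightarrow> ('o, 'm) category \<Rightarrow> 'o dty list \<Rightarrow> 'o dty list \<Rightarrow> 'm sdmor \<Rightarrow> bool" where
  "sdhom C A xs ys h \<longleftrightarrow> inC C (length ys) (length xs) (fst h) \<and> length (snd h) = length ys \<and>
     (\<forall>i<length ys. dhom C A (xs ! (fst h ! i)) (ys ! i) (snd h ! i))"

definition sdobj :: "('o, 'm) category \<Rightarrow> 'o dty list \<Rightarrow> bool" where
  "sdobj A xs \<longleftrightarrow> (\<forall>x\<in>set xs. dobj A x)"

definition is_ctx :: "('o, 'm) category \<Rightarrow> nat \<Rightarrow> 'o dty list list \<Rightarrow> bool" where
  "is_ctx A n G \<longleftrightarrow> length G = n \<and> (\<forall>xs\<in>set G. sdobj A xs)"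

definition ctxhom :: "fclass \<Rightarrow> ('o, 'm) category \<Rightarrow> 'o dty list list \<Rightarrow> 'o dty list list \<Rightarrow> 'm sdmor list \<Rightarrow> bool" where
  "ctxhom C A G G' hs \<longleftrightarrow> length G' = length G \<and> length hs = length G \<and>
     (\<forall>i<length G. sdhom C A (G ! i) (G' ! i) (hs ! i))"

definition ctx_tensor :: "nat \<Rightarrow> 'o dty list list list \<Rightarrow> 'o dty list list" where
  "ctx_tensor n Gs = map (\<lambda>j. concat (map (\<lambda>G. G ! j) Gs)) [0..<n]"

definition single_ctx :: "nat \<Rightarrow> nat \<Rightarrow> 'o dty \<Rightarrow> 'o dty list list" where
  "single_ctx n p a = map (\<lambda>i. if i = p then [a] else []) [0..<n]"

datatype dB = Var nat | App dB dB | Abs dB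

fun closed_at :: "nat \<Rightarrow> dB \<Rightarrow> bool" where
  "closed_at n (Var i) = (i < n)"
| "closed_at n (App s t) = (closed_at n s \<and> closed_at n t)"
| "closed_at n (Abs s) = closed_at (Suc n) s"

fun lift :: "dB \<Rightarrow> nat \<Rightarrow> dB" where
  "lift (Var i) k = (if i < k then Var i else Var (Suc i))"
| "lift (App s t) k = App (lift s k) (lift t k)"
| "lift (Abs s) k = Abs (lift s (Suc k))"

fun subst :: "dB \<Rightarrow> dB \<Rightarrow> nat \<Rightarrow> dB" where
  "subst (Var i) s k = (if k < i then Var (i - 1) else if i = k then s else Var i)"
| "subst (App t u) s k = App (subst t s k) (subst u s k)"
| "subst (Abs t) s k = Abs (subst t (lift s 0) (Suc k))"

inductive beta :: "dB \<Rightarrow> dB \<Rightarrow> bool" where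
  beta_redex: "beta (App (Abs s) t) (subst s t 0)"
| beta_appL: "beta s t \<Longrightarrow> beta (App s u) (App t u)"
| beta_appR: "beta s t \<Longrightarrow> beta (App u s) (App u t)"
| beta_abs: "beta s t \<Longrightarrow> beta (Abs s) (Abs t)"

fun head_var :: "dB \<Rightarrow> bool" where
  "head_var (Var i) = True"
| "head_var (App s t) = head_var s"
| "head_var (Abs s) = False"

fun is_hnf :: "dB \<Rightarrow> bool" where
  "is_hnf (Abs s) = is_hnf s"
| "is_hnf t = head_var t"

fun H :: "dB \<Rightarrow> dB" where
  "H (Var i) = Var i"
| "H (Abs s) = Abs (H s)"
| "H (App (Abs s) t) = subst s t 0"
| "H (App s t) = App (H s) t"

definition head_reduction_ends :: "dB \<Rightarrow> bool" where
  "head_reduction_ends M \<longleftrightarrow> (\<exists>k. is_hnf ((H ^^ k) M))"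

definition head_normalizable :: "dB \<Rightarrow> bool" where
  "head_normalizable M \<longleftrightarrow> (\<exists>N. beta\<^sup>*\<^sup>* M N \<and> is_hnf N)"

section \<open>The denotation (elements, with coends represented by their coproduct presentation)\<close>

datatype ('o, 'm) elem =
    EVar "'m sdmor list"
  | EApp "'o dty list" "'o dty list list list" "('o, 'm) elem" "('o, 'm) elem list" "'m sdmor list"

text \<open>den C A M n D a e: e is a (representative of an) element of [[M]]_x(D, a),
  where x is a context of n variables; de Bruijn index j refers to x at
  0-indexed position n - 1 - j.  For an application the set is the coend
  presented as a quotient of the coproduct of the integrands; here e ranges over
  the coproduct (representatives).\<close>
inductive den :: "fclass \<Rightarrow> ('o, 'm) category \<Rightarrow> dB \<Rightarrow> nat \<Rightarrow> 'o dty list list \<Rightarrow> 'o dty \<Rightarrow> ('o, 'm) elem \<Rightarrow> bool"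
  for C A where
  den_var: "j < n \<Longrightarrow> ctxhom C A D (single_ctx n (n - 1 - j) a) h \<Longrightarrow> den C A (Var j) n D a (EVar h)"
| den_abs: "den C A P (Suc n) (D @ [as]) b e \<Longrightarrow> den C A (Abs P) n D (Arr as b) e"
| den_app: "sdobj A as \<Longrightarrow> length Gs = Suc (length as) \<Longrightarrow> (\<forall>G\<in>set Gs. is_ctx A n G) \<Longrightarrow>
     den C A P n (Gs ! 0) (Arr as a) p \<Longrightarrow> length qs = length as \<Longrightarrow>
     (\<forall>i<length as. den C A Q n (Gs ! Suc i) (as ! i) (qs ! i)) \<Longrightarrow>
     ctxhom C A D (ctx_tensor n Gs) h \<Longrightarrow>
     den C A (App P Q) n D a (EApp as Gs p qs h)"

definition den_nonzero :: "fclass \<Rightarrow> ('o, 'm) category \<Rightarrow> dB \<Rightarrow> nat \<Rightarrow> bool" where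
  "den_nonzero C A M n \<longleftrightarrow> (\<exists>D a. is_ctx A n D \<and> dobj A a \<and> (\<exists>e. den C A M n D a e))"

end

theory Submission
  imports Defs "HOL-Combinatorics.Permutations"
begin

lemma lift_lift: "i < k + 1 \<Longrightarrow> lift (lift t i) (Suc k) = lift (lift t k) i"
  by (induct t arbitrary: i k) auto

lemma lift_subst [simp]:
  "j < i + 1 \<Longrightarrow> lift (subst t s j) i = subst (lift t (i + 1)) (lift s i) j"
  by (induct t arbitrary: i j s) (auto simp add: diff_Suc lift_lift split: nat.split)

lemma lift_subst_lt:
  "i < j + 1 \<Longrightarrow> lift (subst t s j) i = subst (lift t i) (lift s i) (j + 1)"
  by (induct t arbitrary: i j s) (auto simp add: lift_lift)

lemma subst_lift [simp]: "subst (lift t k) s k = t"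
  by (induct t arbitrary: k s) simp_all

lemma subst_subst:
  "i < j + 1 \<Longrightarrow> subst (subst t (lift v i) (Suc j)) (subst u v j) i = subst (subst t u i) v j"
  by (induct t arbitrary: i j u v)
    (auto simp add: diff_Suc subst_lift lift_lift[symmetric] lift_subst_lt split: nat.split)

inductive hstep :: "dB \<Rightarrow> dB \<Rightarrow> bool" where
  hs_beta: "hstep (App (Abs s) t) (subst s t 0)"
| hs_app: "hstep s s' \<Longrightarrow> (\<forall>r. s \<noteq> Abs r) \<Longrightarrow> hstep (App s t) (App s' t)"
| hs_abs: "hstep s s' \<Longrightarrow> hstep (Abs s) (Abs s')"

definition HN :: "dB \<Rightarrow> bool" where
  "HN M \<longleftrightarrow> (\<exists>N. hstep\<^sup>*\<^sup>* M N \<and> is_hnf N)"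

lemma hstep_H: "hstep M M' \<Longrightarrow> H M = M'"
proof (induct rule: hstep.induct)
  case (hs_app s s' t)
  then show ?case by (cases s) (auto elim: hstep.cases)
qed simp_all

lemma head_var_hnf: "head_var s \<Longrightarrow> is_hnf s"
  by (cases s) auto

lemma hnf_no_hstep: "hstep M M' \<Longrightarrow> is_hnf M \<Longrightarrow> False"
proof (induct rule: hstep.induct)
  case (hs_app s s' t)
  then show ?case by (cases s) (auto intro: head_var_hnf)
qed simp_all

lemma not_hnf_hstep: "\<not> is_hnf M \<Longrightarrow> hstep M (H M)"
proof (induct M)
  case (App s t)
  show ?case
  proof (cases s)
    case (Abs r) then show ?thesis by (simp add: hs_beta)
  next
    case (Var i) then show ?thesis using App by simp
  next
    case (App a b)
    then have "hstep s (H s)" using App.prems App.hyps(1) by simp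
    then show ?thesis using App by (auto intro: hs_app)
  qed
qed (auto intro: hstep.intros)

lemma hstep_det: "hstep M X \<Longrightarrow> hstep M Y \<Longrightarrow> X = Y"
  using hstep_H by metis

lemma H_beta: "H M = M \<or> beta M (H M)"
  by (induct M rule: H.induct) (auto intro: beta.intros)

lemma beta_star_H: "beta\<^sup>*\<^sup>* M ((H ^^ k) M)"
proof (induct k arbitrary: M)
  case 0 then show ?case by simp
next
  case (Suc k)
  have "beta\<^sup>*\<^sup>* M (H M)" using H_beta[of M] by auto
  moreover have "beta\<^sup>*\<^sup>* (H M) ((H ^^ k) (H M))" by (rule Suc)
  ultimately show ?case by (simp add: funpow_Suc_right del: funpow.simps)
qed

lemma ends_hnorm: "head_reduction_ends M \<Longrightarrow> head_normalizable M"
  unfolding head_reduction_ends_def head_normalizable_def using beta_star_H by blast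

lemma HN_ends: "HN M \<Longrightarrow> head_reduction_ends M"
proof -
  have "hstep\<^sup>*\<^sup>* M N \<Longrightarrow> is_hnf N \<Longrightarrow> \<exists>k. is_hnf ((H ^^ k) M)" for N
  proof (induct rule: converse_rtranclp_induct)
    case base then show ?case by (metis funpow_0)
  next
    case (step y z)
    then obtain k where "is_hnf ((H ^^ k) z)" by blast
    moreover have "H y = z" using step hstep_H by blast
    ultimately have "is_hnf ((H ^^ Suc k) y)" by (simp add: funpow_Suc_right del: funpow.simps)
    then show ?case by blast
  qed
  then show "HN M \<Longrightarrow> head_reduction_ends M"
    unfolding HN_def head_reduction_ends_def by blast
qed

lemma hnf_HN: "is_hnf M \<Longrightarrow> HN M"
  unfolding HN_def by blast

lemma HN_step: "hstep M M' \<Longrightarrow> HN M' \<Longrightarrow> HN M"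
  unfolding HN_def by (meson converse_rtranclp_into_rtranclp)

lemma HN_Abs: "HN P \<Longrightarrow> HN (Abs P)"
proof -
  have "hstep\<^sup>*\<^sup>* P N \<Longrightarrow> hstep\<^sup>*\<^sup>* (Abs P) (Abs N)" for N
    by (induct rule: rtranclp_induct) (auto intro: hstep.intros rtranclp.rtrancl_into_rtrancl)
  then show "HN P \<Longrightarrow> HN (Abs P)" unfolding HN_def by fastforce
qed

lemma hstep_subst: "hstep s s' \<Longrightarrow> hstep (subst s t k) (subst s' t k)"
proof (induct arbitrary: t k rule: hstep.induct)
  case (hs_beta s u)
  have "hstep (App (Abs (subst s (lift t 0) (Suc k))) (subst u t k))
      (subst (subst s (lift t 0) (Suc k)) (subst u t k) 0)" by (rule hstep.hs_beta)
  then show ?case using subst_subst[of 0 k s t u] by simp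
next
  case (hs_app s s' u)
  then have "\<forall>r. subst s t k \<noteq> Abs r" by (cases s) (auto elim: hstep.cases)
  then show ?case using hs_app by (auto intro: hstep.intros)
next
  case (hs_abs s s') then show ?case by (auto intro: hstep.intros)
qed

lemma head_var_subst_var: "head_var (subst P (Var v) k) \<Longrightarrow> head_var P"
  by (induct P) auto

lemma hnf_subst_var: "is_hnf (subst P (Var v) k) \<Longrightarrow> is_hnf P"
proof (induct P arbitrary: v k)
  case (App s t) then show ?case using head_var_subst_var[of "App s t"] by simp
qed auto

lemma HN_subst_var: "HN (subst P (Var v) k) \<Longrightarrow> HN P"
proof -
  have "hstep\<^sup>*\<^sup>* X Z \<Longrightarrow> is_hnf Z \<Longrightarrow> \<forall>P. X = subst P (Var v) k \<longrightarrow> HN P" for X Z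
  proof (induct rule: converse_rtranclp_induct)
    case base then show ?case using hnf_subst_var hnf_HN by blast
  next
    case (step y z)
    show ?case
    proof (intro allI impI)
      fix P assume y: "y = subst P (Var v) k"
      show "HN P"
      proof (cases "is_hnf P")
        case True then show ?thesis by (rule hnf_HN)
      next
        case False
        then have h: "hstep P (H P)" by (rule not_hnf_hstep)
        then have "hstep y (subst (H P) (Var v) k)" using y hstep_subst by blast
        then have "z = subst (H P) (Var v) k" using step(1) hstep_det by blast
        then have "HN (H P)" using step(3,4) by blast
        then show ?thesis using h HN_step by blast
      qed
    qed
  qed
  then show "HN (subst P (Var v) k) \<Longrightarrow> HN P" unfolding HN_def by blast
qed

lemma HN_app_var: "HN (App M (Var v)) \<Longrightarrow> HN M"
proof -
  have "hstep\<^sup>*\<^sup>* X Z \<Longrightarrow> is_hnf Z \<Longrightarrow> \<forall>M. X = App M (Var v) \<longrightarrow> HN M" for X Z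
  proof (induct rule: converse_rtranclp_induct)
    case base then show ?case using head_var_hnf hnf_HN by auto
  next
    case (step y z)
    show ?case
    proof (intro allI impI)
      fix M assume y: "y = App M (Var v)"
      show "HN M"
      proof (cases M)
        case (Abs P)
        then have "z = subst P (Var v) 0" using step(1) y hstep_det hs_beta by blast
        then have "HN (subst P (Var v) 0)" using step(2,4) unfolding HN_def by blast
        then show ?thesis using Abs HN_subst_var HN_Abs by blast
      next
        case (Var i) then show ?thesis using hnf_HN by simp
      next
        case (App a b)
        have "\<not> is_hnf y" using step(1) hnf_no_hstep by blast
        then have "\<not> is_hnf M" using y App by simp
        then have h: "hstep M (H M)" by (rule not_hnf_hstep)
        then have "hstep y (App (H M) (Var v))" using y App by (auto intro: hs_app)
        then have "z = App (H M) (Var v)" using step(1) hstep_det by blast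
        then have "HN (H M)" using step(3,4) by blast
        then show ?thesis using h HN_step by blast
      qed
    qed
  qed
  then show "HN (App M (Var v)) \<Longrightarrow> HN M" unfolding HN_def by blast
qed

lemma closed_lift: "closed_at n t \<Longrightarrow> closed_at (Suc n) (lift t k)"
  by (induct t arbitrary: n k) auto

lemma closed_subst: "closed_at (Suc n) s \<Longrightarrow> closed_at n t \<Longrightarrow> k \<le> n \<Longrightarrow> closed_at n (subst s t k)"
  by (induct s arbitrary: n t k) (auto simp: closed_lift)

lemma closed_beta: "beta M N \<Longrightarrow> closed_at n M \<Longrightarrow> closed_at n N"
  by (induct arbitrary: n rule: beta.induct) (auto intro: closed_subst)

lemma closed_beta_star: "beta\<^sup>*\<^sup>* M N \<Longrightarrow> closed_at n M \<Longrightarrow> closed_at n N"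
  by (induct rule: rtranclp_induct) (auto intro: closed_beta)

lemma choice_list: "(\<forall>i<m. \<exists>x. P i x) \<Longrightarrow> \<exists>xs. length xs = m \<and> (\<forall>i<m. P i (xs ! i))"
proof -
  assume "\<forall>i<m. \<exists>x. P i x"
  then obtain f where "\<forall>i<m. P i (f i)" by metis
  then show ?thesis by (intro exI[of _ "map f [0..<m]"]) auto
qed

lemma inC_id: "inC C m m [0..<m]"
proof -
  have "bij_betw (\<lambda>i. [0..<m] ! i) {..<m} {..<m} = bij_betw id {..<m} {..<m}"
    by (rule bij_betw_cong) simp
  then have b: "bij_betw (\<lambda>i. [0..<m] ! i) {..<m} {..<m}" using bij_betw_id by simp
  then have "inj_on (\<lambda>i. [0..<m] ! i) {..<m}" "(\<lambda>i. [0..<m] ! i) ` {..<m} = {..<m}"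
    unfolding bij_betw_def by auto
  then show ?thesis using b unfolding inC_def by (cases C) simp_all
qed
lemma inC_I:
  assumes "length al = m" "\<forall>i<m. al ! i < n"
    "C = Bijections \<Longrightarrow> bij_betw (\<lambda>i. al ! i) {..<m} {..<n}"
    "C = Injections \<Longrightarrow> inj_on (\<lambda>i. al ! i) {..<m}"
    "C = Surjections \<Longrightarrow> (\<lambda>i. al ! i) ` {..<m} = {..<n}"
  shows "inC C m n al"
  using assms unfolding inC_def by (cases C) simp_all

lemma inC_D:
  assumes "inC C m n al"
  shows "length al = m" "\<forall>i<m. al ! i < n"
    "C = Bijections \<Longrightarrow> bij_betw (\<lambda>i. al ! i) {..<m} {..<n}"
    "C = Injections \<Longrightarrow> inj_on (\<lambda>i. al ! i) {..<m}"
    "C = Surjections \<Longrightarrow> (\<lambda>i. al ! i) ` {..<m} = {..<n}"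
  using assms unfolding inC_def by simp_all

lemma inC_comp:
  assumes "inC C m k al" "inC C k l be"
  shows "inC C m l (map ((!) be) al)"
proof -
  have l: "length al = m" "\<forall>i<m. al ! i < k" "length be = k" "\<forall>i<k. be ! i < l"
    using assms unfolding inC_def by auto
  have im: "(\<lambda>i. al ! i) ` {..<m} \<subseteq> {..<k}" using l by auto
  have eq: "\<And>i. i \<in> {..<m} \<Longrightarrow> map ((!) be) al ! i = ((\<lambda>j. be ! j) \<circ> (\<lambda>i. al ! i)) i" using l by auto
  have len: "length (map ((!) be) al) = m" using l by simp
  have rng: "\<forall>i<m. map ((!) be) al ! i < l" using l by simp
  show ?thesis
  proof (rule inC_I[OF len rng])
    assume C: "C = Bijections"
    have "bij_betw (\<lambda>i. al ! i) {..<m} {..<k}" "bij_betw (\<lambda>i. be ! i) {..<k} {..<l}"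
      using inC_D(3)[OF assms(1) C] inC_D(3)[OF assms(2) C] by simp_all
    then have "bij_betw ((\<lambda>j. be ! j) \<circ> (\<lambda>i. al ! i)) {..<m} {..<l}" by (rule bij_betw_trans)
    moreover have "bij_betw (\<lambda>i. map ((!) be) al ! i) {..<m} {..<l} = bij_betw ((\<lambda>j. be ! j) \<circ> (\<lambda>i. al ! i)) {..<m} {..<l}"
      by (rule bij_betw_cong) (rule eq)
    ultimately show "bij_betw (\<lambda>i. map ((!) be) al ! i) {..<m} {..<l}" by simp
  next
    assume C: "C = Injections"
    have "inj_on (\<lambda>i. al ! i) {..<m}" "inj_on (\<lambda>i. be ! i) {..<k}"
      using inC_D(4)[OF assms(1) C] inC_D(4)[OF assms(2) C] by simp_all
    then have "inj_on ((\<lambda>j. be ! j) \<circ> (\<lambda>i. al ! i)) {..<m}"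
      using im comp_inj_on inj_on_subset by blast
    moreover have "inj_on (\<lambda>i. map ((!) be) al ! i) {..<m} = inj_on ((\<lambda>j. be ! j) \<circ> (\<lambda>i. al ! i)) {..<m}"
      by (rule inj_on_cong) (rule eq)
    ultimately show "inj_on (\<lambda>i. map ((!) be) al ! i) {..<m}" by simp
  next
    assume C: "C = Surjections"
    have "(\<lambda>i. al ! i) ` {..<m} = {..<k}" "(\<lambda>i. be ! i) ` {..<k} = {..<l}"
      using inC_D(5)[OF assms(1) C] inC_D(5)[OF assms(2) C] by simp_all
    then have "((\<lambda>j. be ! j) \<circ> (\<lambda>i. al ! i)) ` {..<m} = {..<l}"
      by (metis image_comp)
    moreover have "(\<lambda>i. map ((!) be) al ! i) ` {..<m} = ((\<lambda>j. be ! j) \<circ> (\<lambda>i. al ! i)) ` {..<m}"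
      by (rule image_cong) (auto simp: eq)
    ultimately show "(\<lambda>i. map ((!) be) al ! i) ` {..<m} = {..<l}" by simp
  qed
qed

lemma inC_sum:
  assumes "inC C m1 k1 al1" "inC C m2 k2 al2"
  shows "inC C (m1 + m2) (k1 + k2) (al1 @ map (\<lambda>j. j + k1) al2)"
proof -
  let ?g = "\<lambda>i. (al1 @ map (\<lambda>j. j + k1) al2) ! i"
  have l: "length al1 = m1" "\<forall>i<m1. al1 ! i < k1" "length al2 = m2" "\<forall>i<m2. al2 ! i < k2"
    using assms unfolding inC_def by auto
  have g1: "\<And>i. i < m1 \<Longrightarrow> ?g i = al1 ! i" using l by (simp add: nth_append)
  have g2: "\<And>i. m1 \<le> i \<Longrightarrow> i < m1 + m2 \<Longrightarrow> ?g i = al2 ! (i - m1) + k1" using l by (simp add: nth_append)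
  have rng: "\<forall>i<m1 + m2. ?g i < k1 + k2"
  proof (intro allI impI)
    fix i assume i: "i < m1 + m2"
    show "?g i < k1 + k2"
    proof (cases "i < m1")
      case True then show ?thesis using g1 l by (simp add: trans_less_add1)
    next
      case False
      then have "al2 ! (i - m1) < k2" using l i by simp
      then show ?thesis using g2[of i] False i by simp
    qed
  qed
  have split1: "{..<m1+m2} = {..<m1} \<union> (\<lambda>i. i + m1) ` {..<m2}"
  proof
    show "{..<m1+m2} \<subseteq> {..<m1} \<union> (\<lambda>i. i + m1) ` {..<m2}"
    proof
      fix x assume x: "x \<in> {..<m1+m2}"
      show "x \<in> {..<m1} \<union> (\<lambda>i. i + m1) ` {..<m2}"
      proof (cases "x < m1")
        case False then have "x = (x - m1) + m1" "x - m1 < m2" using x by auto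
        then show ?thesis by blast
      qed simp
    qed
  qed auto
  have split2: "{..<k1+k2} = {..<k1} \<union> (\<lambda>j. j + k1) ` {..<k2}"
  proof
    show "{..<k1+k2} \<subseteq> {..<k1} \<union> (\<lambda>i. i + k1) ` {..<k2}"
    proof
      fix x assume x: "x \<in> {..<k1+k2}"
      show "x \<in> {..<k1} \<union> (\<lambda>i. i + k1) ` {..<k2}"
      proof (cases "x < k1")
        case False then have "x = (x - k1) + k1" "x - k1 < k2" using x by auto
        then show ?thesis by blast
      qed simp
    qed
  qed auto
  have img: "?g ` {..<m1+m2} = (\<lambda>i. al1 ! i) ` {..<m1} \<union> (\<lambda>j. j + k1) ` ((\<lambda>i. al2 ! i) ` {..<m2})"
  proof -
    have "?g ` {..<m1+m2} = ?g ` {..<m1} \<union> ?g ` ((\<lambda>i. i + m1) ` {..<m2})"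
      using split1 by (simp add: image_Un)
    moreover have "?g ` {..<m1} = (\<lambda>i. al1 ! i) ` {..<m1}" using g1 by (intro image_cong) auto
    moreover have "?g ` ((\<lambda>i. i + m1) ` {..<m2}) = (\<lambda>j. j + k1) ` ((\<lambda>i. al2 ! i) ` {..<m2})"
      unfolding image_image using g2 by (intro image_cong) auto
    ultimately show ?thesis by simp
  qed
  have inj: "inj_on (\<lambda>i. al1 ! i) {..<m1} \<Longrightarrow> inj_on (\<lambda>i. al2 ! i) {..<m2} \<Longrightarrow> inj_on ?g {..<m1+m2}"
  proof (rule inj_onI)
    fix x y assume i1: "inj_on (\<lambda>i. al1 ! i) {..<m1}" and i2: "inj_on (\<lambda>i. al2 ! i) {..<m2}"
      and x: "x \<in> {..<m1+m2}" and y: "y \<in> {..<m1+m2}" and e: "?g x = ?g y"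
    show "x = y"
    proof (cases "x < m1"; cases "y < m1")
      assume "x < m1" "y < m1" then show ?thesis using e g1 i1 by (auto dest: inj_onD)
    next
      assume a: "x < m1" "\<not> y < m1"
      then have "?g x < k1" "?g y \<ge> k1" using g1 g2[of y] l y by auto
      then show ?thesis using e by simp
    next
      assume a: "\<not> x < m1" "y < m1"
      then have "?g y < k1" "?g x \<ge> k1" using g1 g2[of x] l x by auto
      then show ?thesis using e by simp
    next
      assume a: "\<not> x < m1" "\<not> y < m1"
      then have "al2 ! (x - m1) = al2 ! (y - m1)" using e g2 x y by auto
      then have "x - m1 = y - m1" using i2 a x y by (auto dest: inj_onD)
      then show ?thesis using a by simp
    qed
  qed
  have surj: "(\<lambda>i. al1 ! i) ` {..<m1} = {..<k1} \<Longrightarrow> (\<lambda>i. al2 ! i) ` {..<m2} = {..<k2} \<Longrightarrow>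
      ?g ` {..<m1+m2} = {..<k1+k2}"
  proof -
    assume s1: "(\<lambda>i. al1 ! i) ` {..<m1} = {..<k1}" and s2: "(\<lambda>i. al2 ! i) ` {..<m2} = {..<k2}"
    show ?thesis using split2 img s1 s2 by simp
  qed
  have len: "length (al1 @ map (\<lambda>j. j + k1) al2) = m1 + m2" using l by simp
  show ?thesis
  proof (rule inC_I[OF len rng])
    assume "C = Bijections"
    then have "bij_betw (\<lambda>i. al1 ! i) {..<m1} {..<k1}" "bij_betw (\<lambda>i. al2 ! i) {..<m2} {..<k2}"
      using inC_D(3)[OF assms(1)] inC_D(3)[OF assms(2)] by simp_all
    then have "inj_on ?g {..<m1+m2}" "?g ` {..<m1+m2} = {..<k1+k2}"
      using inj surj unfolding bij_betw_def by blast+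
    then show "bij_betw ?g {..<m1+m2} {..<k1+k2}" unfolding bij_betw_def by blast
  next
    assume "C = Injections"
    then have "inj_on (\<lambda>i. al1 ! i) {..<m1}" "inj_on (\<lambda>i. al2 ! i) {..<m2}"
      using inC_D(4)[OF assms(1)] inC_D(4)[OF assms(2)] by simp_all
    then show "inj_on ?g {..<m1+m2}" using inj by blast
  next
    assume "C = Surjections"
    then have "(\<lambda>i. al1 ! i) ` {..<m1} = {..<k1}" "(\<lambda>i. al2 ! i) ` {..<m2} = {..<k2}"
      using inC_D(5)[OF assms(1)] inC_D(5)[OF assms(2)] by simp_all
    then show "?g ` {..<m1+m2} = {..<k1+k2}" using surj by blast
  qed
qed

lemma inC_perm: "p permutes {..<m} \<Longrightarrow> inC C m m (map p [0..<m])"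
proof -
  assume p: "p permutes {..<m}"
  then have b: "bij_betw p {..<m} {..<m}" by (rule permutes_imp_bij)
  have "bij_betw (\<lambda>i. map p [0..<m] ! i) {..<m} {..<m} = bij_betw p {..<m} {..<m}"
    by (rule bij_betw_cong) simp
  then have b2: "bij_betw (\<lambda>i. map p [0..<m] ! i) {..<m} {..<m}" using b by simp
  have r: "\<forall>i<m. p i < m" using b unfolding bij_betw_def by auto
  have "inj_on (\<lambda>i. map p [0..<m] ! i) {..<m}" "(\<lambda>i. map p [0..<m] ! i) ` {..<m} = {..<m}"
    using b2 unfolding bij_betw_def by auto
  then show ?thesis using b2 r unfolding inC_def by (cases C) simp_all
qed

lemma inC_prefix:
  assumes "C = Injections \<or> C = AllFunctions" "inC C (m1 + m2) k al"
  shows "inC C m1 k (take m1 al)"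
proof -
  have l: "length al = m1 + m2" "\<forall>i<m1+m2. al ! i < k" using assms(2) unfolding inC_def by auto
  show ?thesis
  proof (cases C)
    case Injections
    then have "inj_on (\<lambda>i. al ! i) {..<m1+m2}" using assms(2) unfolding inC_def by simp
    then have "inj_on (\<lambda>i. al ! i) {..<m1}" by (rule inj_on_subset) auto
    moreover have "\<forall>i\<in>{..<m1}. take m1 al ! i = al ! i" by simp
    ultimately have "inj_on (\<lambda>i. take m1 al ! i) {..<m1}" using inj_on_cong by (metis (no_types, lifting))
    then show ?thesis using Injections l unfolding inC_def by simp
  qed (use assms l in \<open>auto simp: inC_def\<close>)
qed

lemma inC_nil:
  assumes "C = Bijections \<or> C = Surjections" "inC C 0 k al"
  shows "k = 0"
proof -
  have "(\<lambda>i. al ! i) ` {..<0} = {..<k}" using assms unfolding inC_def bij_betw_def by auto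
  then show ?thesis by (cases k) auto
qed

definition dle :: "fclass \<Rightarrow> ('o, 'm) category \<Rightarrow> 'o dty \<Rightarrow> 'o dty \<Rightarrow> bool" where
  "dle C A x y \<longleftrightarrow> (\<exists>f. dhom C A x y f)"

definition sdle :: "fclass \<Rightarrow> ('o, 'm) category \<Rightarrow> 'o dty list \<Rightarrow> 'o dty list \<Rightarrow> bool" where
  "sdle C A xs ys \<longleftrightarrow> (\<exists>al. inC C (length ys) (length xs) al \<and> (\<forall>i<length ys. dle C A (xs ! (al ! i)) (ys ! i)))"

definition ctxle :: "fclass \<Rightarrow> ('o, 'm) category \<Rightarrow> 'o dty list list \<Rightarrow> 'o dty list list \<Rightarrow> bool" where
  "ctxle C A D E \<longleftrightarrow> list_all2 (sdle C A) D E"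

lemma sdle_iff: "sdle C A xs ys \<longleftrightarrow> (\<exists>h. sdhom C A xs ys h)"
proof
  assume "sdle C A xs ys"
  then obtain al where al: "inC C (length ys) (length xs) al" "\<forall>i<length ys. \<exists>f. dhom C A (xs ! (al ! i)) (ys ! i) f"
    unfolding sdle_def dle_def by blast
  then obtain fs where "length fs = length ys" "\<forall>i<length ys. dhom C A (xs ! (al ! i)) (ys ! i) (fs ! i)"
    using choice_list[of "length ys" "\<lambda>i f. dhom C A (xs ! (al ! i)) (ys ! i) f", OF al(2)] by blast
  then have "sdhom C A xs ys (al, fs)" using al unfolding sdhom_def by simp
  then show "\<exists>h. sdhom C A xs ys h" by blast
next
  assume "\<exists>h. sdhom C A xs ys h"
  then show "sdle C A xs ys" unfolding sdhom_def sdle_def dle_def by blast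
qed

lemma ctxle_iff: "ctxle C A D E \<longleftrightarrow> (\<exists>hs. ctxhom C A D E hs)"
proof
  assume a: "ctxle C A D E"
  then have l: "length E = length D" unfolding ctxle_def by (simp add: list_all2_lengthD)
  have ex: "\<forall>i<length D. \<exists>h. sdhom C A (D ! i) (E ! i) h"
    using a unfolding ctxle_def sdle_iff by (simp add: list_all2_conv_all_nth)
  then obtain hs where "length hs = length D" "\<forall>i<length D. sdhom C A (D ! i) (E ! i) (hs ! i)"
    using choice_list[of "length D" "\<lambda>i h. sdhom C A (D ! i) (E ! i) h", OF ex] by blast
  then show "\<exists>hs. ctxhom C A D E hs" using l unfolding ctxhom_def by blast
next
  assume "\<exists>hs. ctxhom C A D E hs"
  then obtain hs where "length E = length D" "\<forall>i<length D. sdhom C A (D ! i) (E ! i) (hs ! i)"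
    unfolding ctxhom_def by blast
  then show "ctxle C A D E" unfolding ctxle_def sdle_iff list_all2_conv_all_nth by metis
qed

lemma dle_atom: "dle C A (Atom x) y \<Longrightarrow> \<exists>y'. y = Atom y'"
  unfolding dle_def by (auto elim: dhom.cases)
lemma dle_atom2: "dle C A x (Atom y) \<Longrightarrow> \<exists>x'. x = Atom x'"
  unfolding dle_def by (auto elim: dhom.cases)

lemma dle_arr_iff: "dle C A (Arr bs b) (Arr bs' b') \<longleftrightarrow> sdle C A bs' bs \<and> dle C A b b'"
proof
  assume "dle C A (Arr bs b) (Arr bs' b')"
  then obtain al fs g where "inC C (length bs) (length bs') al" "length fs = length bs"
     "\<forall>i<length bs. dhom C A (bs' ! (al ! i)) (bs ! i) (fs ! i)" "dhom C A b b' g"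
    unfolding dle_def by (auto elim: dhom.cases)
  then show "sdle C A bs' bs \<and> dle C A b b'" unfolding sdle_def dle_def by blast
next
  assume "sdle C A bs' bs \<and> dle C A b b'"
  then obtain al fs g where "inC C (length bs) (length bs') al" "length fs = length bs"
     "\<forall>i<length bs. dhom C A (bs' ! (al ! i)) (bs ! i) (fs ! i)" "dhom C A b b' g"
    unfolding sdle_iff dle_def sdhom_def by auto
  then show "dle C A (Arr bs b) (Arr bs' b')" unfolding dle_def by (blast intro: dhom_arr)
qed

lemma dle_arr: "dle C A (Arr bs b) y \<Longrightarrow> \<exists>bs' b'. y = Arr bs' b'"
  unfolding dle_def by (auto elim: dhom.cases)
lemma dle_arr2: "dle C A x (Arr bs b) \<Longrightarrow> \<exists>bs' b'. x = Arr bs' b'"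
  unfolding dle_def by (auto elim: dhom.cases)

lemma dle_atom_iff: "dle C A (Atom x) (Atom y) \<longleftrightarrow> (\<exists>f\<in>Mor A. Dom A f = x \<and> Cod A f = y)"
  unfolding dle_def by (auto elim: dhom.cases intro: dhom_atom)

lemma dle_refl: "is_category A \<Longrightarrow> dobj A x \<Longrightarrow> dle C A x x"
proof (induct x)
  case (Atom x)
  then show ?case unfolding is_category_def dle_atom_iff by auto
next
  case (Arr bs b)
  have "sdle C A bs bs" unfolding sdle_def
    using Arr by (intro exI[of _ "[0..<length bs]"]) (auto simp: inC_id)
  then show ?case using Arr by (simp add: dle_arr_iff)
qed

lemma sdle_refl: "is_category A \<Longrightarrow> sdobj A xs \<Longrightarrow> sdle C A xs xs"
  unfolding sdle_def sdobj_def
  by (intro exI[of _ "[0..<length xs]"]) (auto simp: inC_id dle_refl)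

lemma sdle_trans_gen:
  assumes "sdle C A xs ys" "sdle C A ys zs"
    and tr: "\<And>x z i. i < length ys \<Longrightarrow> dle C A x (ys ! i) \<Longrightarrow> dle C A (ys ! i) z \<Longrightarrow> dle C A x z"
  shows "sdle C A xs zs"
proof -
  obtain al where al: "inC C (length ys) (length xs) al" "\<forall>i<length ys. dle C A (xs ! (al ! i)) (ys ! i)"
    using assms(1) unfolding sdle_def by blast
  obtain be where be: "inC C (length zs) (length ys) be" "\<forall>i<length zs. dle C A (ys ! (be ! i)) (zs ! i)"
    using assms(2) unfolding sdle_def by blast
  have c: "inC C (length zs) (length xs) (map ((!) al) be)" by (rule inC_comp[OF be(1) al(1)])
  have bl: "length be = length zs" "\<forall>i<length zs. be ! i < length ys" using be(1) by (auto dest: inC_D)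
  have "\<forall>i<length zs. dle C A (xs ! (map ((!) al) be ! i)) (zs ! i)"
  proof (intro allI impI)
    fix i assume i: "i < length zs"
    then have bi: "be ! i < length ys" using bl by blast
    have "dle C A (xs ! (al ! (be ! i))) (ys ! (be ! i))" using al(2) bi by blast
    moreover have "dle C A (ys ! (be ! i)) (zs ! i)" using be(2) i by blast
    ultimately have "dle C A (xs ! (al ! (be ! i))) (zs ! i)" using tr bi by blast
    then show "dle C A (xs ! (map ((!) al) be ! i)) (zs ! i)" using i bl by simp
  qed
  then show ?thesis using c unfolding sdle_def by blast
qed

lemma dle_trans: "is_category A \<Longrightarrow> dle C A x y \<Longrightarrow> dle C A y z \<Longrightarrow> dle C A x z"
proof (induct y arbitrary: x z)
  case (Atom y)
  obtain x' where x: "x = Atom x'" using dle_atom2[OF Atom(2)] by blast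
  obtain z' where z: "z = Atom z'" using dle_atom[OF Atom(3)] by blast
  obtain f where f: "f \<in> Mor A" "Dom A f = x'" "Cod A f = y" using Atom(2) unfolding x dle_atom_iff by blast
  obtain g where g: "g \<in> Mor A" "Dom A g = y" "Cod A g = z'" using Atom(3) unfolding z dle_atom_iff by blast
  have "Comp A g f \<in> Mor A \<and> Dom A (Comp A g f) = x' \<and> Cod A (Comp A g f) = z'"
    using Atom(1) f g unfolding is_category_def by auto
  then show ?case unfolding x z dle_atom_iff by blast
next
  case (Arr bs b)
  obtain bs0 b0 where x: "x = Arr bs0 b0" using dle_arr2[OF Arr(4)] by blast
  obtain bs2 b2 where z: "z = Arr bs2 b2" using dle_arr[OF Arr(5)] by blast
  have s1: "sdle C A bs bs0" "dle C A b0 b" using Arr(4) unfolding x dle_arr_iff by blast+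
  have s2: "sdle C A bs2 bs" "dle C A b b2" using Arr(5) unfolding z dle_arr_iff by blast+
  have "sdle C A bs2 bs0"
    using sdle_trans_gen[OF s2(1) s1(1)] Arr(1,3) nth_mem by blast
  moreover have "dle C A b0 b2" using Arr(2,3) s1 s2 by blast
  ultimately show ?case unfolding x z dle_arr_iff by blast
qed

lemma sdle_trans: "is_category A \<Longrightarrow> sdle C A xs ys \<Longrightarrow> sdle C A ys zs \<Longrightarrow> sdle C A xs zs"
  using sdle_trans_gen dle_trans by metis

lemma ctxle_trans: "is_category A \<Longrightarrow> ctxle C A D E \<Longrightarrow> ctxle C A E F \<Longrightarrow> ctxle C A D F"
proof -
  assume c: "is_category A" and a: "ctxle C A D E" "ctxle C A E F"
  show ?thesis using a unfolding ctxle_def list_all2_conv_all_nth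
    using sdle_trans[OF c] by auto
qed

lemma ctxle_refl: "is_category A \<Longrightarrow> is_ctx A n D \<Longrightarrow> ctxle C A D D"
  unfolding ctxle_def is_ctx_def by (auto simp: list_all2_conv_all_nth intro: sdle_refl)

lemma sdle_nil: "sdle C A [] []"
  unfolding sdle_def using inC_id[of C 0] by auto

lemma sdle_append:
  assumes "sdle C A xs1 ys1" "sdle C A xs2 ys2"
  shows "sdle C A (xs1 @ xs2) (ys1 @ ys2)"
proof -
  obtain al1 where a1: "inC C (length ys1) (length xs1) al1" "\<forall>i<length ys1. dle C A (xs1 ! (al1 ! i)) (ys1 ! i)"
    using assms(1) unfolding sdle_def by blast
  obtain al2 where a2: "inC C (length ys2) (length xs2) al2" "\<forall>i<length ys2. dle C A (xs2 ! (al2 ! i)) (ys2 ! i)"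
    using assms(2) unfolding sdle_def by blast
  let ?al = "al1 @ map (\<lambda>j. j + length xs1) al2"
  have c: "inC C (length (ys1 @ ys2)) (length (xs1 @ xs2)) ?al" using inC_sum[OF a1(1) a2(1)] by simp
  have l1: "length al1 = length ys1" "\<forall>i<length ys1. al1 ! i < length xs1" using a1(1) by (auto dest: inC_D)
  have l2: "length al2 = length ys2" "\<forall>i<length ys2. al2 ! i < length xs2" using a2(1) by (auto dest: inC_D)
  have "\<forall>i<length (ys1 @ ys2). dle C A ((xs1 @ xs2) ! (?al ! i)) ((ys1 @ ys2) ! i)"
  proof (intro allI impI)
    fix i assume i: "i < length (ys1 @ ys2)"
    show "dle C A ((xs1 @ xs2) ! (?al ! i)) ((ys1 @ ys2) ! i)"
    proof (cases "i < length ys1")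
      case True then show ?thesis using a1(2) l1 by (simp add: nth_append)
    next
      case False
      then have "i - length ys1 < length ys2" using i by simp
      then show ?thesis using a2(2) l1 l2 False by (simp add: nth_append)
    qed
  qed
  then show ?thesis using c unfolding sdle_def by blast
qed

lemma sdle_concat: "list_all2 (sdle C A) xss yss \<Longrightarrow> sdle C A (concat xss) (concat yss)"
  by (induct rule: list_all2_induct) (auto intro: sdle_append sdle_nil)

lemma sdle_perm:
  assumes "is_category A" "mset xs = mset ys" "sdobj A ys"
  shows "sdle C A xs ys"
proof -
  obtain p where p: "p permutes {..<length xs}" "permute_list p xs = ys"
    using mset_eq_permutation[of ys xs] assms(2) by metis
  have len: "length ys = length xs" using p(2) unfolding permute_list_def by auto
  have ys: "\<forall>i<length ys. ys ! i = xs ! p i" using p(2) len unfolding permute_list_def by auto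
  have "inC C (length ys) (length xs) (map p [0..<length xs])" using inC_perm[OF p(1)] len by simp
  moreover have "\<forall>i<length ys. dle C A (xs ! (map p [0..<length xs] ! i)) (ys ! i)"
  proof (intro allI impI)
    fix i assume i: "i < length ys"
    have "dle C A (ys ! i) (ys ! i)" using assms(1,3) dle_refl i unfolding sdobj_def by (metis nth_mem)
    then show "dle C A (xs ! (map p [0..<length xs] ! i)) (ys ! i)" using ys i len by simp
  qed
  ultimately show ?thesis unfolding sdle_def by blast
qed

lemma sdle_prefix:
  assumes "sdle C A xs (ys @ zs)" "C = Injections \<or> C = AllFunctions \<or> zs = []"
  shows "sdle C A xs ys"
proof (cases "zs = []")
  case True then show ?thesis using assms by simp
next
  case False
  then have C: "C = Injections \<or> C = AllFunctions" using assms(2) by blast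
  obtain al where al: "inC C (length ys + length zs) (length xs) al" "\<forall>i<length (ys @ zs). dle C A (xs ! (al ! i)) ((ys @ zs) ! i)"
    using assms(1) unfolding sdle_def by auto
  have "inC C (length ys) (length xs) (take (length ys) al)" by (rule inC_prefix[OF C al(1)])
  moreover have "\<forall>i<length ys. dle C A (xs ! (take (length ys) al ! i)) (ys ! i)"
  proof (intro allI impI)
    fix i assume i: "i < length ys"
    then have "dle C A (xs ! (al ! i)) ((ys @ zs) ! i)" using al(2) by simp
    then show "dle C A (xs ! (take (length ys) al ! i)) (ys ! i)" using i by (simp add: nth_append)
  qed
  ultimately show ?thesis unfolding sdle_def by blast
qed

lemma sdle_to_nil: "C = Bijections \<or> C = Surjections \<Longrightarrow> sdle C A xs [] \<Longrightarrow> xs = []"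
  unfolding sdle_def using inC_nil by fastforce

lemma sdle_mem: "sdle C A xs ys \<Longrightarrow> y \<in> set ys \<Longrightarrow> \<exists>x\<in>set xs. dle C A x y"
proof -
  assume "sdle C A xs ys" "y \<in> set ys"
  then obtain al i where "inC C (length ys) (length xs) al" "\<forall>i<length ys. dle C A (xs ! (al ! i)) (ys ! i)"
    "i < length ys" "ys ! i = y"
    unfolding sdle_def in_set_conv_nth by blast
  moreover then have "al ! i < length xs" by (auto dest: inC_D)
  ultimately show ?thesis by (metis nth_mem)
qed

inductive tp :: "fclass \<Rightarrow> ('o, 'm) category \<Rightarrow> dB \<Rightarrow> nat \<Rightarrow> 'o dty list list \<Rightarrow> 'o dty \<Rightarrow> bool"
  for C A where
  tp_var: "j < n \<Longrightarrow> ctxle C A D (single_ctx n (n - 1 - j) a) \<Longrightarrow> tp C A (Var j) n D a"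
| tp_abs: "tp C A P (Suc n) (D @ [as]) b \<Longrightarrow> tp C A (Abs P) n D (Arr as b)"
| tp_app: "is_ctx A n G0 \<Longrightarrow> (\<forall>(b, G)\<in>set ps. tp C A Q n G b \<and> is_ctx A n G \<and> dobj A b) \<Longrightarrow>
     tp C A P n G0 (Arr (map fst ps) a) \<Longrightarrow> ctxle C A D (ctx_tensor n (G0 # map snd ps)) \<Longrightarrow>
     tp C A (App P Q) n D a"

lemma den_typ: "den C A M n D a e \<Longrightarrow> tp C A M n D a"
proof (induct rule: den.induct)
  case (den_var j n D a h)
  then have "ctxle C A D (single_ctx n (n - 1 - j) a)" unfolding ctxle_iff by blast
  then show ?case by (rule tp_var[OF den_var(1)])
next
  case (den_abs P n D as b e)
  then show ?case by (blast intro: tp_abs)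
next
  case (den_app as Gs n P a p qs Q D h)
  let ?ps = "zip as (tl Gs)"
  have lt: "length (tl Gs) = length as" using den_app(2) by simp
  have G: "Gs = Gs ! 0 # tl Gs" using den_app(2) by (cases Gs) auto
  have mf: "map fst ?ps = as" "map snd ?ps = tl Gs" using lt by simp_all
  have all: "\<forall>(b, G)\<in>set ?ps. tp C A Q n G b \<and> is_ctx A n G \<and> dobj A b"
  proof
    fix x assume "x \<in> set ?ps"
    then obtain i where i: "i < length as" "x = (as ! i, tl Gs ! i)"
      using lt by (auto simp: in_set_conv_nth)
    have e: "tl Gs ! i = Gs ! Suc i" using den_app(2) i by (cases Gs) auto
    have m: "Gs ! Suc i \<in> set Gs" using den_app(2) i by simp
    have "tp C A Q n (Gs ! Suc i) (as ! i)" using den_app(7) i by blast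
    moreover have "is_ctx A n (Gs ! Suc i)" using den_app(3) m by blast
    moreover have "dobj A (as ! i)" using den_app(1) i unfolding sdobj_def by simp
    ultimately show "case x of (b, G) \<Rightarrow> tp C A Q n G b \<and> is_ctx A n G \<and> dobj A b"
      using i e by simp
  qed
  have ic: "is_ctx A n (Gs ! 0)" using den_app(2,3) by simp
  have "ctxle C A D (ctx_tensor n Gs)" unfolding ctxle_iff using den_app(8) by blast
  then have cl: "ctxle C A D (ctx_tensor n (Gs ! 0 # map snd ?ps))" using mf G by simp
  have tP: "tp C A P n (Gs ! 0) (Arr (map fst ?ps) a)" using den_app(5) mf by simp
  show ?case by (rule tp_app[OF ic all tP cl])
qed

lemma tp_den: "tp C A M n D a \<Longrightarrow> \<exists>e. den C A M n D a e"
proof (induct rule: tp.induct)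
  case (tp_var j n D a)
  then obtain h where "ctxhom C A D (single_ctx n (n - 1 - j) a) h" unfolding ctxle_iff by blast
  then show ?case using tp_var(1) by (blast intro: den_var)
next
  case (tp_abs P n D as b)
  then show ?case by (blast intro: den_abs)
next
  case (tp_app n G0 ps Q P a D)
  obtain p where p: "den C A P n G0 (Arr (map fst ps) a) p" using tp_app(4) by blast
  have ex: "\<forall>i<length ps. \<exists>e. den C A Q n (snd (ps ! i)) (fst (ps ! i)) e"
  proof (intro allI impI)
    fix i assume "i < length ps"
    then have x: "ps ! i \<in> set ps" by simp
    obtain b G where bG: "ps ! i = (b, G)" by (cases "ps ! i")
    have "(tp C A Q n G b \<and> (\<exists>e. den C A Q n G b e)) \<and> is_ctx A n G \<and> dobj A b"
      using tp_app(2) x unfolding bG by blast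
    then show "\<exists>e. den C A Q n (snd (ps ! i)) (fst (ps ! i)) e" unfolding bG by simp
  qed
  obtain qs where qs: "length qs = length ps" "\<forall>i<length ps. den C A Q n (snd (ps ! i)) (fst (ps ! i)) (qs ! i)"
    using choice_list[of "length ps" "\<lambda>i e. den C A Q n (snd (ps ! i)) (fst (ps ! i)) e", OF ex] by blast
  obtain h where h: "ctxhom C A D (ctx_tensor n (G0 # map snd ps)) h" using tp_app(5) unfolding ctxle_iff by blast
  have sd: "sdobj A (map fst ps)" using tp_app(2) unfolding sdobj_def by auto
  have ic: "\<forall>G\<in>set (G0 # map snd ps). is_ctx A n G" using tp_app(1,2) by auto
  have "den C A (App P Q) n D a (EApp (map fst ps) (G0 # map snd ps) p qs h)"
  proof (rule den_app[OF sd _ ic])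
    show "den C A P n ((G0 # map snd ps) ! 0) (Arr (map fst ps) a) p" using p by simp
    show "\<forall>i<length (map fst ps). den C A Q n ((G0 # map snd ps) ! Suc i) (map fst ps ! i) (qs ! i)"
      using qs by simp
  qed (use qs h in simp_all)
  then show ?case by blast
qed

lemma tp_iff_den: "tp C A M n D a \<longleftrightarrow> (\<exists>e. den C A M n D a e)"
  using den_typ tp_den by blast

lemma den_nonzero_typ: "den_nonzero C A M n \<longleftrightarrow> (\<exists>D a. is_ctx A n D \<and> dobj A a \<and> tp C A M n D a)"
  unfolding den_nonzero_def tp_iff_den by blast

lemma length_tensor [simp]: "length (ctx_tensor n Gs) = n"
  unfolding ctx_tensor_def by simp

lemma nth_tensor: "j < n \<Longrightarrow> ctx_tensor n Gs ! j = concat (map (\<lambda>G. G ! j) Gs)"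
  unfolding ctx_tensor_def by simp

lemma length_single [simp]: "length (single_ctx n p a) = n"
  unfolding single_ctx_def by simp

lemma nth_single: "j < n \<Longrightarrow> single_ctx n p a ! j = (if j = p then [a] else [])"
  unfolding single_ctx_def by simp

lemma tp_len: "tp C A M n D a \<Longrightarrow> length D = n"
  by (induct rule: tp.induct) (auto simp: ctxle_def list_all2_lengthD)

lemma tp_ctx_sub:
  assumes cat: "is_category A"
  shows "tp C A M n D a \<Longrightarrow> is_ctx A n D \<Longrightarrow> dobj A a \<Longrightarrow> ctxle C A D' D \<Longrightarrow> tp C A M n D' a"
proof (induct arbitrary: D' rule: tp.induct)
  case (tp_var j n D a)
  then show ?case using ctxle_trans[OF cat] by (blast intro: tp.tp_var)
next
  case (tp_abs P n D as b)
  have "is_ctx A (Suc n) (D @ [as])" using tp_abs unfolding is_ctx_def sdobj_def by auto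
  moreover have "sdle C A as as" using tp_abs(4) sdle_refl[OF cat] unfolding sdobj_def by simp
  then have "ctxle C A (D' @ [as]) (D @ [as])" using tp_abs(5) unfolding ctxle_def
    by (simp add: list_all2_appendI)
  ultimately show ?case using tp_abs by (auto intro: tp.tp_abs)
next
  case (tp_app n G0 ps Q P a D)
  then show ?case using ctxle_trans[OF cat] by (blast intro: tp.tp_app)
qed

fun R :: "'o dty \<Rightarrow> dB set" where
  "R (Atom x) = {M. HN M}"
| "R (Arr as b) = {M. \<forall>N. (\<forall>x\<in>set as. N \<in> R x) \<longrightarrow> App M N \<in> R b}"

lemma R_neutral: "head_var M \<Longrightarrow> M \<in> R a"
proof (induct a arbitrary: M)
  case (Atom x) then show ?case using head_var_hnf hnf_HN by simp
next
  case (Arr as b)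
  then show ?case by simp
qed

lemma R_HN: "M \<in> R a \<Longrightarrow> HN M"
proof (induct a arbitrary: M)
  case (Atom x) then show ?case by simp
next
  case (Arr as b)
  have "\<forall>x\<in>set as. Var 0 \<in> R x" by (auto intro: R_neutral)
  then have "App M (Var 0) \<in> R b" using Arr(3) by simp
  then have "HN (App M (Var 0))" using Arr(2) by blast
  then show ?case by (rule HN_app_var)
qed

definition apps :: "dB \<Rightarrow> dB list \<Rightarrow> dB" where
  "apps M Ns = foldl App M Ns"

lemma apps_snoc [simp]: "apps M (Ns @ [N]) = App (apps M Ns) N"
  unfolding apps_def by simp

lemma apps_Nil [simp]: "apps M [] = M"
  unfolding apps_def by simp

lemma hstep_apps: "hstep (apps (App (Abs P) N) Ns) (apps (subst P N 0) Ns)"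
proof (induct Ns rule: rev_induct)
  case Nil then show ?case by (simp add: hs_beta)
next
  case (snoc x xs)
  have "\<forall>r. apps (App (Abs P) N) xs \<noteq> Abs r" by (induct xs rule: rev_induct) simp_all
  then show ?case using snoc by (simp add: hs_app)
qed

lemma R_expand: "apps (subst P N 0) Ns \<in> R a \<Longrightarrow> apps (App (Abs P) N) Ns \<in> R a"
proof (induct a arbitrary: Ns)
  case (Atom x) then show ?case using HN_step[OF hstep_apps[of P N Ns]] by simp
next
  case (Arr as b)
  show ?case
  proof (simp, intro allI impI)
    fix Q assume "\<forall>x\<in>set as. Q \<in> R x"
    then have "apps (subst P N 0) (Ns @ [Q]) \<in> R b" using Arr(3) by simp
    then have "apps (App (Abs P) N) (Ns @ [Q]) \<in> R b" using Arr(2) by blast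
    then show "App (apps (App (Abs P) N) Ns) Q \<in> R b" by simp
  qed
qed

lemma R_sub_dhom: "dhom C A x y f \<Longrightarrow> R x \<subseteq> R y"
proof (induct rule: dhom.induct)
  case (dhom_atom f x y) then show ?case by simp
next
  case (dhom_arr bs bs' al fs b b' g)
  have l: "\<forall>i<length bs. al ! i < length bs'" using dhom_arr(1) by (auto dest: inC_D)
  show ?case
  proof (simp, intro subsetI CollectI allI impI)
    fix M N assume M: "M \<in> {M. \<forall>N. (\<forall>x\<in>set bs. N \<in> R x) \<longrightarrow> App M N \<in> R b}"
      and N: "\<forall>x\<in>set bs'. N \<in> R x"
    have "\<forall>x\<in>set bs. N \<in> R x"
    proof
      fix x assume "x \<in> set bs"
      then obtain i where i: "i < length bs" "x = bs ! i" by (auto simp: in_set_conv_nth)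
      have "N \<in> R (bs' ! (al ! i))" using N l i by simp
      then show "N \<in> R x" using dhom_arr(3) i by blast
    qed
    then have "App M N \<in> R b" using M by blast
    then show "App M N \<in> R b'" using dhom_arr(5) by blast
  qed
qed

lemma R_sub: "dle C A x y \<Longrightarrow> M \<in> R x \<Longrightarrow> M \<in> R y"
  unfolding dle_def using R_sub_dhom by blast

fun psubst :: "(nat \<Rightarrow> dB) \<Rightarrow> dB \<Rightarrow> dB" where
  "psubst \<sigma> (Var j) = \<sigma> j"
| "psubst \<sigma> (App s t) = App (psubst \<sigma> s) (psubst \<sigma> t)"
| "psubst \<sigma> (Abs s) = Abs (psubst (\<lambda>j. case j of 0 \<Rightarrow> Var 0 | Suc i \<Rightarrow> lift (\<sigma> i) 0) s)"

lemma psubst_subst: "subst (psubst \<sigma> P) N k = psubst (\<lambda>j. subst (\<sigma> j) N k) P"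
proof (induct P arbitrary: \<sigma> N k)
  case (Abs P)
  have "(\<lambda>j. subst (case j of 0 \<Rightarrow> Var 0 | Suc i \<Rightarrow> lift (\<sigma> i) 0) (lift N 0) (Suc k)) =
        (\<lambda>j. case j of 0 \<Rightarrow> Var 0 | Suc i \<Rightarrow> lift (subst (\<sigma> i) N k) 0)"
    by (rule ext) (simp add: lift_subst_lt split: nat.split)
  then show ?case using Abs by simp
qed simp_all

lemma psubst_Var: "psubst Var M = M"
proof -
  have "(\<lambda>j. case j of 0 \<Rightarrow> Var 0 | Suc i \<Rightarrow> lift (Var i) 0) = Var"
    by (rule ext) (simp split: nat.split)
  then show ?thesis by (induct M) simp_all
qed

lemma psubst_Var_gen: "(\<forall>j. \<sigma> j = Var j) \<Longrightarrow> psubst \<sigma> M = M"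
proof -
  assume "\<forall>j. \<sigma> j = Var j"
  then have "\<sigma> = Var" by auto
  then show ?thesis using psubst_Var by simp
qed

lemma tp_R:
  "tp C A M n D a \<Longrightarrow> (\<forall>j<n. \<forall>x\<in>set (D ! (n - 1 - j)). \<sigma> j \<in> R x) \<Longrightarrow> psubst \<sigma> M \<in> R a"
proof (induct arbitrary: \<sigma> rule: tp.induct)
  case (tp_var j n D a)
  have "list_all2 (sdle C A) D (single_ctx n (n - 1 - j) a)" using tp_var(2) unfolding ctxle_def .
  then have "sdle C A (D ! (n - 1 - j)) (single_ctx n (n - 1 - j) a ! (n - 1 - j))"
    using tp_var(1) by (simp add: list_all2_conv_all_nth)
  then have "sdle C A (D ! (n - 1 - j)) [a]" using tp_var(1) by (simp add: nth_single)
  then obtain x where x: "x \<in> set (D ! (n - 1 - j))" "dle C A x a" using sdle_mem by fastforce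
  then have "\<sigma> j \<in> R x" using tp_var(1,3) by blast
  then show ?case using x R_sub by simp
next
  case (tp_abs P n D as b)
  have lD: "length D = n" using tp_abs(1) tp_len by fastforce
  show ?case
  proof (simp, intro allI impI)
    fix N assume N: "\<forall>x\<in>set as. N \<in> R x"
    let ?s = "\<lambda>j. case j of 0 \<Rightarrow> N | Suc i \<Rightarrow> \<sigma> i"
    have v: "\<forall>j<Suc n. \<forall>x\<in>set ((D @ [as]) ! (Suc n - 1 - j)). ?s j \<in> R x"
    proof (intro allI impI ballI)
      fix j x assume j: "j < Suc n" and x: "x \<in> set ((D @ [as]) ! (Suc n - 1 - j))"
      show "?s j \<in> R x"
      proof (cases j)
        case 0 then show ?thesis using x N lD by (simp add: nth_append)
      next
        case (Suc i)
        then have "(D @ [as]) ! (Suc n - 1 - j) = D ! (n - 1 - i)" using j lD by (simp add: nth_append)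
        then show ?thesis using x Suc tp_abs(3) j by auto
      qed
    qed
    have e: "(\<lambda>j. subst (case j of 0 \<Rightarrow> Var 0 | Suc i \<Rightarrow> lift (\<sigma> i) 0) N 0) = ?s"
      by (rule ext) (simp split: nat.split)
    have "psubst ?s P \<in> R b" using tp_abs(2) v by blast
    then have "subst (psubst (\<lambda>j. case j of 0 \<Rightarrow> Var 0 | Suc i \<Rightarrow> lift (\<sigma> i) 0) P) N 0 \<in> R b"
      using psubst_subst e by metis
    then have "apps (App (Abs (psubst (\<lambda>j. case j of 0 \<Rightarrow> Var 0 | Suc i \<Rightarrow> lift (\<sigma> i) 0) P)) N) [] \<in> R b"
      using R_expand[of _ N "[]"] by simp
    then show "App (Abs (psubst (\<lambda>j. case j of 0 \<Rightarrow> Var 0 | Suc i \<Rightarrow> lift (\<sigma> i) 0) P)) N \<in> R b" by simp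
  qed
next
  case (tp_app n G0 ps Q P a D)
  have trans: "\<forall>j<n. \<forall>y\<in>set (G ! (n - 1 - j)). \<sigma> j \<in> R y" if G: "G \<in> set (G0 # map snd ps)" for G
  proof (intro allI impI ballI)
    fix j y assume j: "j < n" and y: "y \<in> set (G ! (n - 1 - j))"
    let ?p = "n - 1 - j"
    have p: "?p < n" using j by simp
    have "y \<in> set (ctx_tensor n (G0 # map snd ps) ! ?p)" using y G p by (auto simp: nth_tensor)
    moreover have "sdle C A (D ! ?p) (ctx_tensor n (G0 # map snd ps) ! ?p)"
      using tp_app(5) p unfolding ctxle_def by (simp add: list_all2_conv_all_nth)
    ultimately obtain x where "x \<in> set (D ! ?p)" "dle C A x y" using sdle_mem by blast
    then show "\<sigma> j \<in> R y" using tp_app(6) j R_sub by blast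
  qed
  have "psubst \<sigma> P \<in> R (Arr (map fst ps) a)" using tp_app(4) trans[of G0] by simp
  moreover have "\<forall>x\<in>set (map fst ps). psubst \<sigma> Q \<in> R x"
  proof
    fix x assume "x \<in> set (map fst ps)"
    then obtain G where xG: "(x, G) \<in> set ps" by auto
    then have "G \<in> set (G0 # map snd ps)" by force
    then have v: "\<forall>j<n. \<forall>y\<in>set (G ! (n - 1 - j)). \<sigma> j \<in> R y" by (rule trans)
    have "\<forall>\<sigma>. (\<forall>j<n. \<forall>y\<in>set (G ! (n - 1 - j)). \<sigma> j \<in> R y) \<longrightarrow> psubst \<sigma> Q \<in> R x"
      using tp_app(2) xG by fastforce
    then show "psubst \<sigma> Q \<in> R x" using v by blast
  qed
  ultimately show ?case by simp
qed

lemma tp_HN: "tp C A M n D a \<Longrightarrow> HN M"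
proof -
  assume "tp C A M n D a"
  moreover have "\<forall>j<n. \<forall>x\<in>set (D ! (n - 1 - j)). Var j \<in> R x" by (auto intro: R_neutral)
  ultimately have "psubst Var M \<in> R a" by (rule tp_R)
  then show "HN M" using psubst_Var R_HN by metis
qed

definition ins :: "nat \<Rightarrow> 'a \<Rightarrow> 'a list \<Rightarrow> 'a list" where
  "ins p x D = take p D @ x # drop p D"

definition rem :: "nat \<Rightarrow> 'a list \<Rightarrow> 'a list" where
  "rem p D = take p D @ drop (Suc p) D"

lemma length_ins [simp]: "p \<le> length D \<Longrightarrow> length (ins p x D) = Suc (length D)"
  unfolding ins_def by simp

lemma nth_ins: "p \<le> length D \<Longrightarrow> j < Suc (length D) \<Longrightarrow>
   ins p x D ! j = (if j < p then D ! j else if j = p then x else D ! (j - 1))"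
  unfolding ins_def by (auto simp: nth_append min_def)

lemma length_rem [simp]: "p < length D \<Longrightarrow> length (rem p D) = length D - 1"
  unfolding rem_def by simp

lemma nth_rem: "p < length D \<Longrightarrow> j < length D - 1 \<Longrightarrow>
   rem p D ! j = (if j < p then D ! j else D ! (Suc j))"
  unfolding rem_def by (auto simp: nth_append min_def)

lemma ins_snoc: "p \<le> length G \<Longrightarrow> ins p x (G @ [g]) = ins p x G @ [g]"
  unfolding ins_def by simp

lemma ins_end: "ins (length D) x D = D @ [x]"
  unfolding ins_def by simp

lemma rem_snoc: "p < length G \<Longrightarrow> rem p (G @ [g]) = rem p G @ [g]"
  unfolding rem_def by simp

lemma single_ins_lt: "j < k \<Longrightarrow> k \<le> n \<Longrightarrow>
  ins (n - k) [] (single_ctx n (n - 1 - j) a) = single_ctx (Suc n) (Suc n - 1 - j) a"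
  by (rule nth_equalityI) (auto simp: nth_ins nth_single)

lemma single_ins_gt: "k < j \<Longrightarrow> j \<le> n \<Longrightarrow>
  ins (n - k) [] (single_ctx n (n - 1 - (j - 1)) a) = single_ctx (Suc n) (Suc n - 1 - j) a"
  by (rule nth_equalityI) (auto simp: nth_ins nth_single)

lemma single_ins_eq: "k \<le> n \<Longrightarrow> ins (n - k) [a] (replicate n []) = single_ctx (Suc n) (Suc n - 1 - k) a"
  by (rule nth_equalityI) (auto simp: nth_ins nth_single)

lemma single_rem_lt: "i < k \<Longrightarrow> k \<le> n \<Longrightarrow>
  rem (n - k) (single_ctx (Suc n) (Suc n - 1 - i) a) = single_ctx n (n - 1 - i) a"
  by (rule nth_equalityI) (auto simp: nth_rem nth_single)

lemma single_rem_ge: "k \<le> i \<Longrightarrow> Suc i < Suc n \<Longrightarrow> k \<le> n \<Longrightarrow>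
  rem (n - k) (single_ctx (Suc n) (Suc n - 1 - Suc i) a) = single_ctx n (n - 1 - i) a"
  by (rule nth_equalityI) (auto simp: nth_rem nth_single)

lemma list_all2_ins: "list_all2 P X Y \<Longrightarrow> P x y \<Longrightarrow> list_all2 P (ins p x X) (ins p y Y)"
  unfolding ins_def by (intro list_all2_appendI list_all2_takeI list_all2_Cons[THEN iffD2] conjI list_all2_dropI)

lemma list_all2_rem: "list_all2 P X Y \<Longrightarrow> list_all2 P (rem p X) (rem p Y)"
  unfolding rem_def by (intro list_all2_appendI list_all2_takeI list_all2_dropI)

lemma is_ctx_ins: "is_ctx A n D \<Longrightarrow> sdobj A xs \<Longrightarrow> p \<le> n \<Longrightarrow> is_ctx A (Suc n) (ins p xs D)"
  unfolding is_ctx_def ins_def by (auto dest: in_set_takeD in_set_dropD)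

lemma is_ctx_rem: "is_ctx A (Suc n) D \<Longrightarrow> p < Suc n \<Longrightarrow> is_ctx A n (rem p D)"
  unfolding is_ctx_def rem_def by (auto dest: in_set_takeD in_set_dropD)

lemma is_ctx_take: "is_ctx A (Suc n) D \<Longrightarrow> is_ctx A n (take n D)"
  unfolding is_ctx_def by (auto dest: in_set_takeD)

lemma is_ctx_snoc: "is_ctx A n D \<Longrightarrow> sdobj A xs \<Longrightarrow> is_ctx A (Suc n) (D @ [xs])"
  unfolding is_ctx_def by auto

lemma is_ctx_last: "is_ctx A (Suc n) D \<Longrightarrow> sdobj A (D ! n)"
  unfolding is_ctx_def by auto

lemma is_ctx_replicate: "is_ctx A n (replicate n [])"
  unfolding is_ctx_def sdobj_def by auto

lemma is_ctx_single: "dobj A a \<Longrightarrow> p < n \<Longrightarrow> is_ctx A n (single_ctx n p a)"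
  unfolding is_ctx_def sdobj_def single_ctx_def by auto

lemma is_ctx_tensor: "\<forall>G\<in>set Gs. is_ctx A n G \<Longrightarrow> is_ctx A n (ctx_tensor n Gs)"
  unfolding is_ctx_def ctx_tensor_def sdobj_def by fastforce

lemma tensor_ins:
  assumes "\<forall>x\<in>set L. length (snd x) = n" "p \<le> n"
  shows "ctx_tensor (Suc n) (map (\<lambda>x. ins p (fst x) (snd x)) L) = ins p (concat (map fst L)) (ctx_tensor n (map snd L))"
proof (rule nth_equalityI)
  fix j assume "j < length (ctx_tensor (Suc n) (map (\<lambda>x. ins p (fst x) (snd x)) L))"
  then have j: "j < Suc n" by simp
  have "\<And>x. x \<in> set L \<Longrightarrow> ins p (fst x) (snd x) ! j = (if j < p then snd x ! j else if j = p then fst x else snd x ! (j - 1))"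
    using assms j by (simp add: nth_ins)
  then show "ctx_tensor (Suc n) (map (\<lambda>x. ins p (fst x) (snd x)) L) ! j = ins p (concat (map fst L)) (ctx_tensor n (map snd L)) ! j"
    using j assms(2) by (simp add: nth_tensor nth_ins cong: map_cong)
qed (use assms in simp)

lemma tensor_rem:
  assumes "\<forall>G\<in>set Gs. length G = Suc n" "p < Suc n"
  shows "rem p (ctx_tensor (Suc n) Gs) = ctx_tensor n (map (rem p) Gs)"
proof (rule nth_equalityI)
  fix j assume "j < length (rem p (ctx_tensor (Suc n) Gs))"
  then have j: "j < n" using assms by simp
  have "\<And>G. G \<in> set Gs \<Longrightarrow> rem p G ! j = (if j < p then G ! j else G ! Suc j)"
    using assms j by (simp add: nth_rem)
  then show "rem p (ctx_tensor (Suc n) Gs) ! j = ctx_tensor n (map (rem p) Gs) ! j"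
    using j assms(2) by (simp add: nth_tensor nth_rem cong: map_cong)
qed (use assms in simp)

lemma tensor_take: "take n (ctx_tensor (Suc n) Gs) = ctx_tensor n (map (take n) Gs)"
proof (rule nth_equalityI)
  fix i assume "i < length (take n (ctx_tensor (Suc n) Gs))"
  then have i: "i < n" by simp
  then have "map (\<lambda>G. take n G ! i) Gs = map (\<lambda>G. G ! i) Gs" by simp
  then show "take n (ctx_tensor (Suc n) Gs) ! i = ctx_tensor n (map (take n) Gs) ! i"
    using i by (simp add: nth_tensor comp_def)
qed simp

lemma tensor_last: "ctx_tensor (Suc n) Gs ! n = concat (map (\<lambda>G. G ! n) Gs)"
  by (simp add: nth_tensor)

lemma tensor_single: "length D = n \<Longrightarrow> ctx_tensor n [D] = D"
  by (rule nth_equalityI) (simp_all add: nth_tensor)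

lemma tensor_rep: "ctx_tensor n (replicate n [] # Gs) = ctx_tensor n Gs"
  by (rule nth_equalityI) (simp_all add: nth_tensor)

lemma concat_map_concat2: "concat (map (\<lambda>Hs. concat (map f Hs)) Hss) = concat (map f (concat Hss))"
  by (induct Hss) simp_all

lemma tensor_concat: "ctx_tensor n (map (ctx_tensor n) Hss) = ctx_tensor n (concat Hss)"
proof (rule nth_equalityI)
  fix j assume "j < length (ctx_tensor n (map (ctx_tensor n) Hss))"
  then have j: "j < n" by simp
  have "map (\<lambda>G. G ! j) (map (ctx_tensor n) Hss) = map (\<lambda>Hs. concat (map (\<lambda>G. G ! j) Hs)) Hss"
    using j by (simp add: nth_tensor)
  then show "ctx_tensor n (map (ctx_tensor n) Hss) ! j = ctx_tensor n (concat Hss) ! j"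
    using j by (simp add: nth_tensor concat_map_concat2 del: map_map)
qed simp

lemma tensor_cons_tensor: "ctx_tensor n (ctx_tensor n Hs # Gs) = ctx_tensor n (Hs @ Gs)"
  by (rule nth_equalityI) (simp_all add: nth_tensor)

lemma tensor_mono:
  assumes "list_all2 (ctxle C A) Gs Hs" "\<forall>G\<in>set Gs. length G = n"
  shows "ctxle C A (ctx_tensor n Gs) (ctx_tensor n Hs)"
  unfolding ctxle_def
proof (rule list_all2_all_nthI)
  fix j assume "j < length (ctx_tensor n Gs)"
  then have j: "j < n" by simp
  have "list_all2 (sdle C A) (map (\<lambda>G. G ! j) Gs) (map (\<lambda>G. G ! j) Hs)"
    using assms j unfolding ctxle_def list_all2_conv_all_nth by auto
  then show "sdle C A (ctx_tensor n Gs ! j) (ctx_tensor n Hs ! j)"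
    using j by (simp add: nth_tensor sdle_concat)
qed simp

lemma mset_concat_eq: "mset xss = mset yss \<Longrightarrow> mset (concat xss) = mset (concat yss)"
proof -
  assume a: "mset xss = mset yss"
  have e: "\<And>zs. mset (concat zs) = sum_mset (image_mset mset (mset zs))"
    by (induct_tac zs) auto
  show ?thesis by (simp only: e a)
qed

lemma tensor_perm:
  assumes "is_category A" "mset Gs = mset Hs" "\<forall>H\<in>set Hs. is_ctx A n H"
  shows "ctxle C A (ctx_tensor n Gs) (ctx_tensor n Hs)"
  unfolding ctxle_def
proof (rule list_all2_all_nthI)
  fix j assume "j < length (ctx_tensor n Gs)"
  then have j: "j < n" by simp
  have "mset (map (\<lambda>G. G ! j) Gs) = mset (map (\<lambda>G. G ! j) Hs)" using assms(2) by simp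
  then have m: "mset (concat (map (\<lambda>G. G ! j) Gs)) = mset (concat (map (\<lambda>G. G ! j) Hs))"
    by (rule mset_concat_eq)
  have "sdobj A (concat (map (\<lambda>G. G ! j) Hs))"
  proof -
    have "\<forall>H\<in>set Hs. \<forall>x\<in>set (H ! j). dobj A x"
      using assms(3) j unfolding is_ctx_def sdobj_def by (metis nth_mem)
    then show ?thesis unfolding sdobj_def by auto
  qed
  then show "sdle C A (ctx_tensor n Gs ! j) (ctx_tensor n Hs ! j)"
    using j sdle_perm[OF assms(1) m] by (simp add: nth_tensor)
qed simp

inductive_cases tpVarE: "tp C A (Var j) n D a"
inductive_cases tpAbsE: "tp C A (Abs P) n D a"
inductive_cases tpAppE: "tp C A (App P Q) n D a"

lemma ctxle_rem: "ctxle C A X Y \<Longrightarrow> ctxle C A (rem p X) (rem p Y)"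
  unfolding ctxle_def by (rule list_all2_rem)

lemma ctxle_nth: "ctxle C A X Y \<Longrightarrow> j < length Y \<Longrightarrow> sdle C A (X ! j) (Y ! j)"
  unfolding ctxle_def by (simp add: list_all2_conv_all_nth)

lemma tp_strengthen:
  "tp C A (lift t k) (Suc n) G b \<Longrightarrow> k \<le> n \<Longrightarrow> tp C A t n (rem (n - k) G) b"
proof (induct t arbitrary: k n G b)
  case (Var i)
  show ?case
  proof (cases "i < k")
    case True
    then have "tp C A (Var i) (Suc n) G b" using Var by simp
    then have c: "ctxle C A G (single_ctx (Suc n) (Suc n - 1 - i) b)" by (auto elim: tpVarE)
    have "ctxle C A (rem (n - k) G) (single_ctx n (n - 1 - i) b)"
      using ctxle_rem[OF c, of "n - k"] single_rem_lt[OF True Var(2), of b] by metis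
    moreover have "i < n" using True Var(2) by simp
    ultimately show ?thesis by (rule_tac tp_var)
  next
    case False
    then have "tp C A (Var (Suc i)) (Suc n) G b" using Var by simp
    then have c: "ctxle C A G (single_ctx (Suc n) (Suc n - 1 - Suc i) b)" and l: "Suc i < Suc n"
      by (auto elim: tpVarE)
    have "ctxle C A (rem (n - k) G) (single_ctx n (n - 1 - i) b)"
      using ctxle_rem[OF c, of "n - k"] single_rem_ge[of k i n b] False l Var(2) by (metis not_less)
    moreover have "i < n" using l by simp
    ultimately show ?thesis by (rule_tac tp_var)
  qed
next
  case (App s u)
  from App(3) have "tp C A (App (lift s k) (lift u k)) (Suc n) G b" by simp
  then obtain G0 ps where G0: "is_ctx A (Suc n) G0"
    and ps: "\<forall>(c, K)\<in>set ps. tp C A (lift u k) (Suc n) K c \<and> is_ctx A (Suc n) K \<and> dobj A c"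
    and tps: "tp C A (lift s k) (Suc n) G0 (Arr (map fst ps) b)"
    and cl: "ctxle C A G (ctx_tensor (Suc n) (G0 # map snd ps))"
    by (auto elim: tpAppE)
  let ?p = "n - k"
  let ?ps = "map (\<lambda>x. (fst x, rem ?p (snd x))) ps"
  have p: "?p < Suc n" by simp
  have "is_ctx A n (rem ?p G0)" using is_ctx_rem[OF G0 p] .
  moreover have "\<forall>(c, K)\<in>set ?ps. tp C A u n K c \<and> is_ctx A n K \<and> dobj A c"
  proof
    fix x assume "x \<in> set ?ps"
    then obtain c K where cK: "(c, K) \<in> set ps" "x = (c, rem ?p K)" by auto
    then have "tp C A (lift u k) (Suc n) K c" "is_ctx A (Suc n) K" "dobj A c" using ps by auto
    then show "case x of (c, K) \<Rightarrow> tp C A u n K c \<and> is_ctx A n K \<and> dobj A c"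
      using cK App(2) App(4) is_ctx_rem[OF _ p] by simp
  qed
  moreover have "tp C A s n (rem ?p G0) (Arr (map fst ?ps) b)"
    using App(1)[OF tps App(4)] by (simp add: comp_def)
  moreover have "ctxle C A (rem ?p G) (ctx_tensor n (rem ?p G0 # map snd ?ps))"
  proof -
    have "\<forall>K\<in>set (G0 # map snd ps). length K = Suc n" using G0 ps unfolding is_ctx_def by auto
    then have "rem ?p (ctx_tensor (Suc n) (G0 # map snd ps)) = ctx_tensor n (map (rem ?p) (G0 # map snd ps))"
      using tensor_rem p by blast
    then show ?thesis using ctxle_rem[OF cl, of ?p] by (simp add: comp_def)
  qed
  ultimately show ?case by (rule tp_app)
next
  case (Abs s)
  from Abs(2) have "tp C A (Abs (lift s (Suc k))) (Suc n) G b" by simp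
  then obtain as b' where b: "b = Arr as b'" and t: "tp C A (lift s (Suc k)) (Suc (Suc n)) (G @ [as]) b'"
    by (auto elim: tpAbsE)
  have lG: "length G = Suc n" using Abs(2) tp_len by fastforce
  have "tp C A s (Suc n) (rem (Suc n - Suc k) (G @ [as])) b'" using Abs(1)[OF t] Abs(3) by simp
  then have "tp C A s (Suc n) (rem (n - k) G @ [as]) b'" using lG rem_snoc[of "n - k" G as] by simp
  then show ?case unfolding b by (rule tp_abs)
qed

lemma tp_unused:
  "C = Bijections \<or> C = Surjections \<Longrightarrow> tp C A (lift t k) (Suc n) G b \<Longrightarrow> k \<le> n \<Longrightarrow> G ! (n - k) = []"
proof (induct t arbitrary: k n G b)
  case (Var i)
  have lG: "length G = Suc n" using Var(2) tp_len by fastforce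
  obtain q where "ctxle C A G (single_ctx (Suc n) q b)" "q \<noteq> n - k"
  proof (cases "i < k")
    case True
    then have "tp C A (Var i) (Suc n) G b" using Var by simp
    then have "ctxle C A G (single_ctx (Suc n) (Suc n - 1 - i) b)" by (auto elim: tpVarE)
    then show ?thesis using that True Var(3) by simp
  next
    case False
    then have "tp C A (Var (Suc i)) (Suc n) G b" using Var by simp
    then have "ctxle C A G (single_ctx (Suc n) (Suc n - 1 - Suc i) b)" "Suc i < Suc n" by (auto elim: tpVarE)
    then show ?thesis using that False Var(3) by simp
  qed
  then have "sdle C A (G ! (n - k)) (single_ctx (Suc n) q b ! (n - k))" using ctxle_nth[of C A G _ "n - k"] by simp
  then have "sdle C A (G ! (n - k)) []" using \<open>q \<noteq> n - k\<close> by (simp add: nth_single)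
  then show ?case using sdle_to_nil Var(1) by blast
next
  case (App s u)
  from App(4) have "tp C A (App (lift s k) (lift u k)) (Suc n) G b" by simp
  then obtain G0 ps where G0: "is_ctx A (Suc n) G0"
    and ps: "\<forall>(c, K)\<in>set ps. tp C A (lift u k) (Suc n) K c \<and> is_ctx A (Suc n) K \<and> dobj A c"
    and tps: "tp C A (lift s k) (Suc n) G0 (Arr (map fst ps) b)"
    and cl: "ctxle C A G (ctx_tensor (Suc n) (G0 # map snd ps))"
    by (auto elim: tpAppE)
  have "G0 ! (n - k) = []" using App(1)[OF App(3) tps App(5)] .
  moreover have "\<forall>K\<in>set (map snd ps). K ! (n - k) = []"
  proof
    fix K assume "K \<in> set (map snd ps)"
    then obtain c where "(c, K) \<in> set ps" by auto
    then have "tp C A (lift u k) (Suc n) K c" using ps by auto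
    then show "K ! (n - k) = []" using App(2)[OF App(3) _ App(5)] by blast
  qed
  ultimately have "ctx_tensor (Suc n) (G0 # map snd ps) ! (n - k) = []" by (simp add: nth_tensor)
  then have "sdle C A (G ! (n - k)) []" using ctxle_nth[OF cl, of "n - k"] by simp
  then show ?case using sdle_to_nil App(3) by blast
next
  case (Abs s)
  from Abs(3) have "tp C A (Abs (lift s (Suc k))) (Suc n) G b" by simp
  then obtain as b' where t: "tp C A (lift s (Suc k)) (Suc (Suc n)) (G @ [as]) b'"
    by (auto elim: tpAbsE)
  have lG: "length G = Suc n" using Abs(3) tp_len by fastforce
  have "(G @ [as]) ! (Suc n - Suc k) = []" using Abs(1)[OF Abs(2) t] Abs(4) by simp
  moreover have "n - k < length G" using lG by simp
  ultimately show ?case by (simp add: nth_append)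
qed

lemma mset_concat_heads:
  "mset (concat (map (\<lambda>x. f x # g x) xs)) = mset (map f xs) + mset (concat (map g xs))"
  by (induct xs) auto

lemma rem_last: "length G = Suc n \<Longrightarrow> rem n G = take n G"
  unfolding rem_def by simp

lemma tp_antisubst:
  assumes cat: "is_category A"
  shows "tp C A (subst s t k) n D a \<Longrightarrow> k \<le> n \<Longrightarrow> is_ctx A n D \<Longrightarrow> dobj A a \<Longrightarrow>
    \<exists>G0 ps. is_ctx A n G0 \<and> (\<forall>(b, G)\<in>set ps. tp C A t n G b \<and> is_ctx A n G \<and> dobj A b) \<and>
      tp C A s (Suc n) (ins (n - k) (map fst ps) G0) a \<and> ctxle C A D (ctx_tensor n (G0 # map snd ps))"
proof (induct s arbitrary: t k n D a)
  case (Var j)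
  have lD: "length D = n" using Var(3) unfolding is_ctx_def by simp
  have refl: "ctxle C A D (ctx_tensor n [D])" using tensor_single[OF lD] ctxle_refl[OF cat Var(3)] by simp
  consider "j = k" | "j < k" | "k < j" by linarith
  then show ?case
  proof cases
    case 1
    then have tt: "tp C A t n D a" using Var(1) by simp
    have "ctxle C A (ins (n - k) [a] (replicate n [])) (single_ctx (Suc n) (Suc n - 1 - k) a)"
      using single_ins_eq[OF Var(2), of a] ctxle_refl[OF cat is_ctx_single[OF Var(4)]] by fastforce
    then have "tp C A (Var j) (Suc n) (ins (n - k) (map fst [(a, D)]) (replicate n [])) a"
      using 1 Var(2) by (auto intro: tp_var)
    moreover have "ctxle C A D (ctx_tensor n (replicate n [] # map snd [(a, D)]))"
      using refl by (simp add: tensor_rep)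
    ultimately show ?thesis using tt Var(3,4) is_ctx_replicate
      by (intro exI[of _ "replicate n []"] exI[of _ "[(a, D)]"]) auto
  next
    case 2
    then have "tp C A (Var j) n D a" using Var(1) by simp
    then have j: "j < n" and c: "ctxle C A D (single_ctx n (n - 1 - j) a)" by (auto elim: tpVarE)
    have "ctxle C A (ins (n - k) [] D) (ins (n - k) [] (single_ctx n (n - 1 - j) a))"
      using c sdle_nil unfolding ctxle_def by (rule list_all2_ins)
    then have "ctxle C A (ins (n - k) [] D) (single_ctx (Suc n) (Suc n - 1 - j) a)"
      unfolding single_ins_lt[OF 2 Var(2)] .
    then have "tp C A (Var j) (Suc n) (ins (n - k) (map fst []) D) a" using j by (auto intro: tp_var)
    then show ?thesis using Var(3) refl
      by (intro exI[of _ D] exI[of _ "[]"]) auto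
  next
    case 3
    then have "tp C A (Var (j - 1)) n D a" using Var(1) by simp
    then have j: "j - 1 < n" and c: "ctxle C A D (single_ctx n (n - 1 - (j - 1)) a)" by (auto elim: tpVarE)
    have jn: "j \<le> n" using j 3 by simp
    have "ctxle C A (ins (n - k) [] D) (ins (n - k) [] (single_ctx n (n - 1 - (j - 1)) a))"
      using c sdle_nil unfolding ctxle_def by (rule list_all2_ins)
    then have "ctxle C A (ins (n - k) [] D) (single_ctx (Suc n) (Suc n - 1 - j) a)"
      unfolding single_ins_gt[OF 3 jn] .
    then have "tp C A (Var j) (Suc n) (ins (n - k) (map fst []) D) a" using j by (auto intro: tp_var)
    then show ?thesis using Var(3) refl
      by (intro exI[of _ D] exI[of _ "[]"]) auto
  qed
next
  case (App u v)
  let ?p = "n - k"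
  from App(3) have "tp C A (App (subst u t k) (subst v t k)) n D a" by simp
  then obtain G0 ps where G0: "is_ctx A n G0"
    and ps: "\<forall>(b, G)\<in>set ps. tp C A (subst v t k) n G b \<and> is_ctx A n G \<and> dobj A b"
    and tu: "tp C A (subst u t k) n G0 (Arr (map fst ps) a)"
    and cl: "ctxle C A D (ctx_tensor n (G0 # map snd ps))"
    by (auto elim: tpAppE)
  have dA: "dobj A (Arr (map fst ps) a)" using ps App(6) by auto
  obtain H0 q0 where H0: "is_ctx A n H0"
    and q0: "\<forall>(b, G)\<in>set q0. tp C A t n G b \<and> is_ctx A n G \<and> dobj A b"
    and tu': "tp C A u (Suc n) (ins ?p (map fst q0) H0) (Arr (map fst ps) a)"
    and c0: "ctxle C A G0 (ctx_tensor n (H0 # map snd q0))"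
    using App(1)[OF tu App(4) G0 dA] by blast
  have "\<forall>x\<in>set ps. \<exists>y. is_ctx A n (fst y) \<and> (\<forall>(b, G)\<in>set (snd y). tp C A t n G b \<and> is_ctx A n G \<and> dobj A b) \<and>
      tp C A v (Suc n) (ins ?p (map fst (snd y)) (fst y)) (fst x) \<and> ctxle C A (snd x) (ctx_tensor n (fst y # map snd (snd y)))"
  proof
    fix x assume x: "x \<in> set ps"
    obtain b G where bG: "x = (b, G)" by (cases x)
    have "tp C A (subst v t k) n G b" "is_ctx A n G" "dobj A b" using ps x bG by auto
    then show "\<exists>y. is_ctx A n (fst y) \<and> (\<forall>(b, G)\<in>set (snd y). tp C A t n G b \<and> is_ctx A n G \<and> dobj A b) \<and>
      tp C A v (Suc n) (ins ?p (map fst (snd y)) (fst y)) (fst x) \<and> ctxle C A (snd x) (ctx_tensor n (fst y # map snd (snd y)))"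
      using App(2)[of t k n G b] App(4) bG by auto
  qed
  then obtain f where f: "\<forall>x\<in>set ps. is_ctx A n (fst (f x)) \<and> (\<forall>(b, G)\<in>set (snd (f x)). tp C A t n G b \<and> is_ctx A n G \<and> dobj A b) \<and>
      tp C A v (Suc n) (ins ?p (map fst (snd (f x))) (fst (f x))) (fst x) \<and> ctxle C A (snd x) (ctx_tensor n (fst (f x) # map snd (snd (f x))))"
    by (rule bchoice[elim_format]) blast
  define fH where "fH x = fst (f x)" for x
  define fq where "fq x = snd (f x)" for x
  have f': "\<And>x. x \<in> set ps \<Longrightarrow> is_ctx A n (fH x)"
    "\<And>x. x \<in> set ps \<Longrightarrow> (\<forall>(b, G)\<in>set (fq x). tp C A t n G b \<and> is_ctx A n G \<and> dobj A b)"
    "\<And>x. x \<in> set ps \<Longrightarrow> tp C A v (Suc n) (ins ?p (map fst (fq x)) (fH x)) (fst x)"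
    "\<And>x. x \<in> set ps \<Longrightarrow> ctxle C A (snd x) (ctx_tensor n (fH x # map snd (fq x)))"
    using f unfolding fH_def fq_def by blast+
  define heads where "heads = H0 # map fH ps"
  define allq where "allq = q0 @ concat (map fq ps)"
  have hc: "\<forall>H\<in>set heads. is_ctx A n H" using H0 f'(1) unfolding heads_def by auto
  have aq: "\<forall>(b, G)\<in>set allq. tp C A t n G b \<and> is_ctx A n G \<and> dobj A b"
    using q0 f'(2) unfolding allq_def by fastforce
  have "tp C A (App u v) (Suc n) (ins ?p (map fst allq) (ctx_tensor n heads)) a"
  proof -
    let ?G0 = "ins ?p (map fst q0) H0"
    let ?ps = "map (\<lambda>x. (fst x, ins ?p (map fst (fq x)) (fH x))) ps"
    have sq0: "sdobj A (map fst q0)" using q0 unfolding sdobj_def by auto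
    have i1: "is_ctx A (Suc n) ?G0" using is_ctx_ins[OF H0 sq0] by simp
    have i2: "\<forall>(b, G)\<in>set ?ps. tp C A v (Suc n) G b \<and> is_ctx A (Suc n) G \<and> dobj A b"
    proof
      fix y assume "y \<in> set ?ps"
      then obtain x where x: "x \<in> set ps" "y = (fst x, ins ?p (map fst (fq x)) (fH x))" by auto
      have "sdobj A (map fst (fq x))" using f'(2)[OF x(1)] unfolding sdobj_def by auto
      then have "is_ctx A (Suc n) (ins ?p (map fst (fq x)) (fH x))" using is_ctx_ins[OF f'(1)[OF x(1)]] by simp
      moreover have "dobj A (fst x)" using ps x(1) by auto
      ultimately show "case y of (b, G) \<Rightarrow> tp C A v (Suc n) G b \<and> is_ctx A (Suc n) G \<and> dobj A b"
        using x f'(3) by auto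
    qed
    have i3: "tp C A u (Suc n) ?G0 (Arr (map fst ?ps) a)" using tu' by (simp add: comp_def)
    let ?L = "(map fst q0, H0) # map (\<lambda>x. (map fst (fq x), fH x)) ps"
    have L1: "?G0 # map snd ?ps = map (\<lambda>y. ins ?p (fst y) (snd y)) ?L" by simp
    have L2: "map snd ?L = heads" unfolding heads_def by simp
    have L3: "concat (map fst ?L) = map fst allq" unfolding allq_def by (simp add: map_concat comp_def)
    have Ll: "\<forall>y\<in>set ?L. length (snd y) = n" using H0 f'(1) unfolding is_ctx_def by auto
    have "ctx_tensor (Suc n) (?G0 # map snd ?ps) = ins ?p (map fst allq) (ctx_tensor n heads)"
      using tensor_ins[OF Ll, of ?p] L1 L2 L3 by (simp add: comp_def)
    moreover have "is_ctx A (Suc n) (ins ?p (map fst allq) (ctx_tensor n heads))"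
    proof -
      have "sdobj A (map fst allq)" using aq unfolding sdobj_def by auto
      then show ?thesis using is_ctx_ins[OF is_ctx_tensor[OF hc]] by simp
    qed
    ultimately have i4: "ctxle C A (ins ?p (map fst allq) (ctx_tensor n heads)) (ctx_tensor (Suc n) (?G0 # map snd ?ps))"
      using ctxle_refl[OF cat] by metis
    show ?thesis by (rule tp_app[OF i1 i2 i3 i4])
  qed
  moreover have "ctxle C A D (ctx_tensor n (ctx_tensor n heads # map snd allq))"
  proof -
    define Kss where "Kss = (H0 # map snd q0) # map (\<lambda>x. fH x # map snd (fq x)) ps"
    have "list_all2 (ctxle C A) (G0 # map snd ps) (map (ctx_tensor n) Kss)"
    proof -
      have "list_all2 (ctxle C A) (map snd ps) (map (\<lambda>x. ctx_tensor n (fH x # map snd (fq x))) ps)"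
        unfolding list_all2_conv_all_nth using f'(4) by simp
      then show ?thesis unfolding Kss_def using c0 by (simp add: comp_def)
    qed
    moreover have "\<forall>G\<in>set (G0 # map snd ps). length G = n" using G0 ps unfolding is_ctx_def by auto
    ultimately have "ctxle C A (ctx_tensor n (G0 # map snd ps)) (ctx_tensor n (map (ctx_tensor n) Kss))"
      by (rule tensor_mono)
    then have s1: "ctxle C A (ctx_tensor n (G0 # map snd ps)) (ctx_tensor n (concat Kss))"
      by (simp add: tensor_concat)
    have "mset (concat Kss) = mset (heads @ map snd allq)"
      unfolding Kss_def heads_def allq_def by (simp add: mset_concat_heads map_concat comp_def)
    moreover have "\<forall>H\<in>set (heads @ map snd allq). is_ctx A n H" using hc aq by auto
    ultimately have "ctxle C A (ctx_tensor n (concat Kss)) (ctx_tensor n (heads @ map snd allq))"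
      by (rule tensor_perm[OF cat])
    then show ?thesis using cl s1 ctxle_trans[OF cat] tensor_cons_tensor by metis
  qed
  ultimately show ?case using is_ctx_tensor[OF hc] aq by blast
next
  case (Abs s)
  from Abs(2) have "tp C A (Abs (subst s (lift t 0) (Suc k))) n D a" by simp
  then obtain as b where a: "a = Arr as b" and ts: "tp C A (subst s (lift t 0) (Suc k)) (Suc n) (D @ [as]) b"
    by (auto elim: tpAbsE)
  have sas: "sdobj A as" and db: "dobj A b" using Abs(5) a by (auto simp: sdobj_def)
  have lD: "length D = n" using Abs(4) unfolding is_ctx_def by simp
  obtain G0 ps where G0: "is_ctx A (Suc n) G0"
    and ps: "\<forall>(c, G)\<in>set ps. tp C A (lift t 0) (Suc n) G c \<and> is_ctx A (Suc n) G \<and> dobj A c"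
    and tS: "tp C A s (Suc (Suc n)) (ins (Suc n - Suc k) (map fst ps) G0) b"
    and cl: "ctxle C A (D @ [as]) (ctx_tensor (Suc n) (G0 # map snd ps))"
    using Abs(1)[OF ts _ is_ctx_snoc[OF Abs(4) sas] db] Abs(3) by auto
  have lG0: "length G0 = Suc n" using G0 unfolding is_ctx_def by simp
  define G0' where "G0' = take n G0"
  define g where "g = G0 ! n"
  have G0e: "G0 = G0' @ [g]" unfolding G0'_def g_def using lG0
    using take_Suc_conv_app_nth[of n G0] by simp
  define ps' where "ps' = map (\<lambda>x. (fst x, take n (snd x))) ps"
  have iG0': "is_ctx A n G0'" unfolding G0'_def using is_ctx_take[OF G0] .
  have ips: "\<forall>(c, G)\<in>set ps'. tp C A t n G c \<and> is_ctx A n G \<and> dobj A c"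
  proof
    fix y assume "y \<in> set ps'"
    then obtain c G where cG: "(c, G) \<in> set ps" "y = (c, take n G)" unfolding ps'_def by auto
    then have tG: "tp C A (lift t 0) (Suc n) G c" and iG: "is_ctx A (Suc n) G" and dc: "dobj A c" using ps by auto
    have "length G = Suc n" using iG unfolding is_ctx_def by simp
    then have "tp C A t n (take n G) c" using tp_strengthen[OF tG] rem_last by fastforce
    then show "case y of (c, G) \<Rightarrow> tp C A t n G c \<and> is_ctx A n G \<and> dobj A c"
      using cG is_ctx_take[OF iG] dc by simp
  qed
  define E where "E = ins (n - k) (map fst ps) G0'"
  have lG0': "length G0' = n" unfolding G0'_def using lG0 by simp
  have Ee: "ins (Suc n - Suc k) (map fst ps) G0 = E @ [g]"
    unfolding E_def G0e using ins_snoc[of "n - k" G0'] lG0' by simp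
  have "sdobj A (map fst ps)" using ps unfolding sdobj_def by auto
  then have iE: "is_ctx A (Suc n) E" unfolding E_def using is_ctx_ins[OF iG0'] by simp
  have ig: "sdobj A g" unfolding g_def using is_ctx_last[OF G0] .
  have "sdle C A as g"
  proof -
    have "sdle C A ((D @ [as]) ! n) (ctx_tensor (Suc n) (G0 # map snd ps) ! n)"
      using ctxle_nth[OF cl] by simp
    then have s: "sdle C A as (g @ concat (map (\<lambda>G. G ! n) (map snd ps)))"
      using lD by (simp add: nth_append tensor_last g_def)
    have "C = Injections \<or> C = AllFunctions \<or> concat (map (\<lambda>G. G ! n) (map snd ps)) = []"
    proof (cases "C = Bijections \<or> C = Surjections")
      case True
      have "\<forall>G\<in>set (map snd ps). G ! n = []"
      proof
        fix G assume "G \<in> set (map snd ps)"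
        then obtain c where "(c, G) \<in> set ps" by auto
        then have "tp C A (lift t 0) (Suc n) G c" using ps by auto
        then show "G ! n = []" using tp_unused[OF True] by fastforce
      qed
      then show ?thesis by simp
    next
      case False then show ?thesis by (cases C) auto
    qed
    then show ?thesis using sdle_prefix[OF s] by blast
  qed
  then have "ctxle C A (E @ [as]) (E @ [g])"
    using ctxle_refl[OF cat iE] unfolding ctxle_def by (simp add: list_all2_appendI)
  moreover have "tp C A s (Suc (Suc n)) (E @ [g]) b" using tS Ee by simp
  moreover have "is_ctx A (Suc (Suc n)) (E @ [g])" using is_ctx_snoc[OF iE ig] .
  ultimately have "tp C A s (Suc (Suc n)) (E @ [as]) b" using tp_ctx_sub[OF cat] db by blast
  then have t1: "tp C A (Abs s) (Suc n) (ins (n - k) (map fst ps') G0') a"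
    unfolding a E_def ps'_def by (simp add: comp_def tp_abs)
  have "ctxle C A (take n (D @ [as])) (take n (ctx_tensor (Suc n) (G0 # map snd ps)))"
    using cl unfolding ctxle_def by (rule list_all2_takeI)
  then have t2: "ctxle C A D (ctx_tensor n (G0' # map snd ps'))"
    using lD by (simp add: tensor_take G0'_def ps'_def comp_def)
  show ?case using iG0' ips t1 t2 by blast
qed

lemma tp_expand:
  assumes cat: "is_category A"
  shows "beta M N \<Longrightarrow> tp C A N n D a \<Longrightarrow> is_ctx A n D \<Longrightarrow> dobj A a \<Longrightarrow> tp C A M n D a"
proof (induct arbitrary: n D a rule: beta.induct)
  case (beta_redex s t)
  obtain G0 ps where G0: "is_ctx A n G0"
    and ps: "\<forall>(b, G)\<in>set ps. tp C A t n G b \<and> is_ctx A n G \<and> dobj A b"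
    and ts: "tp C A s (Suc n) (ins (n - 0) (map fst ps) G0) a"
    and cl: "ctxle C A D (ctx_tensor n (G0 # map snd ps))"
    using tp_antisubst[OF cat beta_redex(1) _ beta_redex(2,3)] by blast
  have "length G0 = n" using G0 unfolding is_ctx_def by simp
  then have "tp C A s (Suc n) (G0 @ [map fst ps]) a" using ts ins_end[of G0] by simp
  then have "tp C A (Abs s) n G0 (Arr (map fst ps) a)" by (rule tp_abs)
  then show ?case using G0 ps cl by (blast intro: tp_app)
next
  case (beta_appL s t u)
  from beta_appL(3) obtain G0 ps where G0: "is_ctx A n G0"
    and ps: "\<forall>(b, G)\<in>set ps. tp C A u n G b \<and> is_ctx A n G \<and> dobj A b"
    and tt: "tp C A t n G0 (Arr (map fst ps) a)"
    and cl: "ctxle C A D (ctx_tensor n (G0 # map snd ps))"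
    by (auto elim: tpAppE)
  have "dobj A (Arr (map fst ps) a)" using ps beta_appL(5) by auto
  then have "tp C A s n G0 (Arr (map fst ps) a)" using beta_appL(2)[OF tt G0] by blast
  then show ?case using G0 ps cl by (blast intro: tp_app)
next
  case (beta_appR s t u)
  from beta_appR(3) obtain G0 ps where G0: "is_ctx A n G0"
    and ps: "\<forall>(b, G)\<in>set ps. tp C A t n G b \<and> is_ctx A n G \<and> dobj A b"
    and tt: "tp C A u n G0 (Arr (map fst ps) a)"
    and cl: "ctxle C A D (ctx_tensor n (G0 # map snd ps))"
    by (auto elim: tpAppE)
  have "\<forall>(b, G)\<in>set ps. tp C A s n G b \<and> is_ctx A n G \<and> dobj A b"
  proof
    fix x assume x: "x \<in> set ps"
    obtain b G where bG: "x = (b, G)" by (cases x)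
    have "tp C A t n G b" "is_ctx A n G" "dobj A b" using ps x bG by auto
    then show "case x of (b, G) \<Rightarrow> tp C A s n G b \<and> is_ctx A n G \<and> dobj A b"
      using beta_appR(2) bG by blast
  qed
  then show ?case using G0 tt cl by (blast intro: tp_app)
next
  case (beta_abs s t)
  from beta_abs(3) obtain as b where a: "a = Arr as b" and tt: "tp C A t (Suc n) (D @ [as]) b"
    by (auto elim: tpAbsE)
  have "sdobj A as" "dobj A b" using beta_abs(5) a by (auto simp: sdobj_def)
  then have "tp C A s (Suc n) (D @ [as]) b"
    using beta_abs(2)[OF tt is_ctx_snoc[OF beta_abs(4)]] by blast
  then show ?case unfolding a by (rule tp_abs)
qed

lemma tp_expand_star:
  assumes cat: "is_category A"
  shows "beta\<^sup>*\<^sup>* M N \<Longrightarrow> tp C A N n D a \<Longrightarrow> is_ctx A n D \<Longrightarrow> dobj A a \<Longrightarrow> tp C A M n D a"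
proof (induct rule: rtranclp_induct)
  case base then show ?case by simp
next
  case (step y z)
  then show ?case using tp_expand[OF cat step(2)] by blast
qed

lemma hv_tp:
  assumes cat: "is_category A"
  shows "head_var N \<Longrightarrow> closed_at n N \<Longrightarrow> dobj A a \<Longrightarrow> \<exists>D. is_ctx A n D \<and> tp C A N n D a"
proof (induct N arbitrary: a)
  case (Var j)
  then have j: "j < n" by simp
  have ic: "is_ctx A n (single_ctx n (n - 1 - j) a)" using is_ctx_single[OF Var(3)] j by simp
  then have "tp C A (Var j) n (single_ctx n (n - 1 - j) a) a" using j ctxle_refl[OF cat ic] by (blast intro: tp_var)
  then show ?case using ic by blast
next
  case (App s t)
  have "dobj A (Arr [] a)" using App(5) by simp
  moreover have "head_var s" "closed_at n s" using App(3,4) by simp_all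
  ultimately obtain D where D: "is_ctx A n D" "tp C A s n D (Arr [] a)" using App(1) by blast
  have lD: "length D = n" using D(1) unfolding is_ctx_def by simp
  have cl: "ctxle C A D (ctx_tensor n [D])" using ctxle_refl[OF cat D(1)] tensor_single[OF lD] by metis
  have "tp C A (App s t) n D a"
    by (rule tp_app[where ps="[]"]) (use D cl in simp_all)
  then show ?case using D by blast
next
  case (Abs s) then show ?case by simp
qed

lemma hnf_tp:
  assumes cat: "is_category A" and ob: "Ob A \<noteq> {}"
  shows "is_hnf N \<Longrightarrow> closed_at n N \<Longrightarrow> \<exists>D a. is_ctx A n D \<and> dobj A a \<and> tp C A N n D a"
proof (induct N arbitrary: n)
  case (Abs s)
  have "is_hnf s" "closed_at (Suc n) s" using Abs(2,3) by simp_all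
  then obtain D a where D: "is_ctx A (Suc n) D" "dobj A a" "tp C A s (Suc n) D a" using Abs(1) by blast
  have lD: "length D = Suc n" using D(1) unfolding is_ctx_def by simp
  have De: "D = take n D @ [D ! n]" using lD take_Suc_conv_app_nth[of n D] by simp
  have "tp C A s (Suc n) (take n D @ [D ! n]) a" using D(3) De by simp
  then have "tp C A (Abs s) n (take n D) (Arr (D ! n) a)" by (rule tp_abs)
  moreover have "dobj A (Arr (D ! n) a)" using is_ctx_last[OF D(1)] D(2) unfolding sdobj_def by simp
  ultimately show ?case using is_ctx_take[OF D(1)] by blast
next
  case (Var j)
  obtain o' where "o' \<in> Ob A" using ob by blast
  then have d: "dobj A (Atom o')" by simp
  have "\<exists>D. is_ctx A n D \<and> tp C A (Var j) n D (Atom o')"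
    by (rule hv_tp[OF cat]) (use Var d in simp_all)
  then show ?case using d by blast
next
  case (App s t)
  obtain o' where "o' \<in> Ob A" using ob by blast
  then have d: "dobj A (Atom o')" by simp
  have "head_var (App s t)" using App(3) by simp
  then show ?case using hv_tp[OF cat _ App(4) d] d by blast
qed

theorem theorem5:
  fixes C :: fclass and A :: "('o, 'm) category" and M :: dB and n :: nat
  assumes "is_category A" and "Ob A \<noteq> {}" and "closed_at n M"
  shows "(den_nonzero C A M n \<longleftrightarrow> head_reduction_ends M) \<and>
         (head_reduction_ends M \<longleftrightarrow> head_normalizable M)"
proof -
  have a: "den_nonzero C A M n \<Longrightarrow> head_reduction_ends M"
    unfolding den_nonzero_typ using tp_HN HN_ends by blast
  have b: "head_normalizable M \<Longrightarrow> den_nonzero C A M n"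
  proof -
    assume "head_normalizable M"
    then obtain N where N: "beta\<^sup>*\<^sup>* M N" "is_hnf N" unfolding head_normalizable_def by blast
    have "closed_at n N" using closed_beta_star[OF N(1) assms(3)] .
    then obtain D a where D: "is_ctx A n D" "dobj A a" "tp C A N n D a"
      using hnf_tp[OF assms(1,2) N(2)] by blast
    then have "tp C A M n D a" using tp_expand_star[OF assms(1) N(1)] by blast
    then show ?thesis unfolding den_nonzero_typ using D by blast
  qed
  show ?thesis using a b ends_hnorm by blast
qed

end
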